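(* Assume all struts are straight, let $k\ge0$ and $n=k+1$. Then there exists a constant $k_d>0$ (possibly depending on $V_k$ and $M_n$) such that \[ \inf_{\psi\in M_n\setminus\{0\}}\ \sup_{\Sigma\in V_k\setminus\{0\}}\frac{b(\Sigma,\psi)}{\|\Sigma\|_{V}\|\psi\|_{M}}\ge k_d . \]
   Context: Network: a stent is modelled by a finite connected graph with vertices $j=1,\dots,n_{\mathcal V}$ and oriented edges $i=1,\dots,n_{\mathcal E}$. $J_j^-$ ($J_j^+$) is the set of edges leaving (entering) vertex $j$. Edge $i$ is a straight segment of length $\ell^i>0$, parametrized by $\Phi^i(s)=\Phi^i(0)+s\,t^i$, $s\in[0,\ell^i]$, with constant unit tangent $t^i$; $s=0$ at the vertex it leaves, $s=\ell^i$ at the vertex it enters. Matrices: $A^+_{I}\in\mathbb{R}^{3n_{\mathcal V}\times 3n_{\mathcal E}}$ has $3\times3$ block $I_3$ in block row $j$, block column $i$ if $i\in J_j^+$ and $0$ otherwise; $A^-_I$ likewise with $J_j^-$. Spaces: $L^2(\mathcal N;\mathbb{R}^3)=\prod_iL^2(0,\ell^i;\mathbb{R}^3)$, $L^2_{H^1}(\mathcal N;\mathbb{R}^3)=\prod_iH^1(0,\ell^i;\mathbb{R}^3)$, product norms; $\int_{\mathcal N}v=\sum_i\int_0^{\ell^i}v^i\,ds$. $V=L^2(\mathcal N;\mathbb{R}^3)^2\times(\mathbb{R}^{3n_{\mathcal E}})^4\times\mathbb{R}^3\times\mathbb{R}^3$ with elements $\Sigma=(q,p,P_+,P_-,Q_+,Q_-,\alpha,\beta)$,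 $M=L^2_{H^1}(\mathcal N;\mathbb{R}^3)^2\times\mathbb{R}^{3n_{\mathcal V}}\times\mathbb{R}^{3n_{\mathcal V}}$ with elements $\psi=(v,w,V,W)$, product Hilbert norms. $P_m(\mathcal N)$ = functions that on each edge are polynomials of degree at most $m$ (no continuity at vertices); $V_k=P_k(\mathcal N)^3\times P_k(\mathcal N)^3\times(\mathbb{R}^{3n_{\mathcal E}})^4\times\mathbb{R}^3\times\mathbb{R}^3\subset V$, $M_n=P_n(\mathcal N)^3\times P_n(\mathcal N)^3\times\mathbb{R}^{3n_{\mathcal V}}\times\mathbb{R}^{3n_{\mathcal V}}\subset M$ with the induced norms. $b(\Sigma,\psi)=\sum_i\int_0^{\ell^i}\big(-p^i\cdot(\partial_sv^i+t^i\times w^i)-q^i\cdot\partial_sw^i\big)ds+\sum_i\big(P^i_+\cdot v^i(\ell^i)-P^i_-\cdot v^i(0)\big)+\sum_i\big(Q^i_+\cdot w^i(\ell^i)-Q^i_-\cdot w^i(0)\big)-(A^+_IP_+-A^-_IP_-)\cdot V-(A^+_IQ_+-A^-_IQ_-)\cdot W+\alpha\cdot\int_{\mathcal N}v+\beta\cdot\int_{\mathcal N}w$. *)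

theory Defs
  imports "HOL-Analysis.Analysis"
begin

text \<open>A network of straight struts: vertices 0..<nV, oriented edges 0..<nE.
  Edge i leaves vertex src i and enters vertex tgt i, has length ell i and
  constant unit tangent tan i; pos j is the position of vertex j in R^3.\<close>
record network =
  nV  :: nat
  nE  :: nat
  src :: "nat \<Rightarrow> nat"
  tgt :: "nat \<Rightarrow> nat"
  ell :: "nat \<Rightarrow> real"
  tan :: "nat \<Rightarrow> real^3"
  pos :: "nat \<Rightarrow> real^3"

definition edge_rel :: "network \<Rightarrow> (nat \<times> nat) set" where
  "edge_rel N = {(src N i, tgt N i) | i. i < nE N} \<union> {(tgt N i, src N i) | i. i < nE N}"

text \<open>Finite connected graph whose edges are straight segments
  Phi^i(s) = pos (src i) + s * tan i, s in [0, ell i], ending at pos (tgt i).\<close>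
definition straight_network :: "network \<Rightarrow> bool" where
  "straight_network N \<longleftrightarrow>
     0 < nV N \<and> 0 < nE N \<and>
     (\<forall>i<nE N. src N i < nV N \<and> tgt N i < nV N \<and> 0 < ell N i \<and> norm (tan N i) = 1 \<and>
                pos N (src N i) + ell N i *\<^sub>R tan N i = pos N (tgt N i)) \<and>
     (\<forall>j<nV N. \<forall>j'<nV N. (j, j') \<in> (edge_rel N)\<^sup>*)"

text \<open>Elements Sigma = (q,p,P+,P-,Q+,Q-,alpha,beta) of V and psi = (v,w,V,W) of M.
  Functions on the network are given edgewise: q i is the function on edge i.\<close>
record sigmaV =
  sq  :: "nat \<Rightarrow> real \<Rightarrow> real^3"
  sp  :: "nat \<Rightarrow> real \<Rightarrow> real^3"
  sPp :: "nat \<Rightarrow> real^3"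
  sPm :: "nat \<Rightarrow> real^3"
  sQp :: "nat \<Rightarrow> real^3"
  sQm :: "nat \<Rightarrow> real^3"
  salpha :: "real^3"
  sbeta  :: "real^3"

record psiM =
  pv :: "nat \<Rightarrow> real \<Rightarrow> real^3"
  pw :: "nat \<Rightarrow> real \<Rightarrow> real^3"
  pV :: "nat \<Rightarrow> real^3"
  pW :: "nat \<Rightarrow> real^3"

definition polyfun :: "nat \<Rightarrow> (real \<Rightarrow> real^3) \<Rightarrow> bool" where
  "polyfun m f \<longleftrightarrow> (\<exists>c :: nat \<Rightarrow> real^3. \<forall>s. f s = (\<Sum>j\<le>m. s ^ j *\<^sub>R c j))"

text \<open>P_m(N)^3: edgewise polynomials of degree at most m (junk indices set to 0).\<close>
definition Pm_net :: "network \<Rightarrow> nat \<Rightarrow> (nat \<Rightarrow> real \<Rightarrow> real^3) set" where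
  "Pm_net N m = {f. (\<forall>i<nE N. polyfun m (f i)) \<and> (\<forall>i\<ge>nE N. f i = (\<lambda>_. 0))}"

text \<open>Vectors in R^{3 n} represented as n blocks in R^3 (junk indices set to 0).\<close>
definition blockvec :: "nat \<Rightarrow> (nat \<Rightarrow> real^3) set" where
  "blockvec n = {x. \<forall>i\<ge>n. x i = 0}"

definition Vk :: "network \<Rightarrow> nat \<Rightarrow> sigmaV set" where
  "Vk N k = {S. sq S \<in> Pm_net N k \<and> sp S \<in> Pm_net N k \<and>
     sPp S \<in> blockvec (nE N) \<and> sPm S \<in> blockvec (nE N) \<and>
     sQp S \<in> blockvec (nE N) \<and> sQm S \<in> blockvec (nE N)}"

definition Mn :: "network \<Rightarrow> nat \<Rightarrow> psiM set" where
  "Mn N n = {P. pv P \<in> Pm_net N n \<and> pw P \<in> Pm_net N n \<and>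
     pV P \<in> blockvec (nV N) \<and> pW P \<in> blockvec (nV N)}"

definition zeroV :: sigmaV where
  "zeroV = \<lparr>sq = (\<lambda>_ _. 0), sp = (\<lambda>_ _. 0), sPp = (\<lambda>_. 0), sPm = (\<lambda>_. 0),
            sQp = (\<lambda>_. 0), sQm = (\<lambda>_. 0), salpha = 0, sbeta = 0\<rparr>"

definition zeroM :: psiM where
  "zeroM = \<lparr>pv = (\<lambda>_ _. 0), pw = (\<lambda>_ _. 0), pV = (\<lambda>_. 0), pW = (\<lambda>_. 0)\<rparr>"

definition L2sq :: "network \<Rightarrow> (nat \<Rightarrow> real \<Rightarrow> real^3) \<Rightarrow> real" where
  "L2sq N f = (\<Sum>i<nE N. integral {0..ell N i} (\<lambda>s. (norm (f i s))\<^sup>2))"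

definition H1sq :: "network \<Rightarrow> (nat \<Rightarrow> real \<Rightarrow> real^3) \<Rightarrow> real" where
  "H1sq N f = (\<Sum>i<nE N. integral {0..ell N i}
      (\<lambda>s. (norm (f i s))\<^sup>2 + (norm (vector_derivative (f i) (at s)))\<^sup>2))"

definition vecsq :: "nat \<Rightarrow> (nat \<Rightarrow> real^3) \<Rightarrow> real" where
  "vecsq n x = (\<Sum>i<n. (norm (x i))\<^sup>2)"

definition normV :: "network \<Rightarrow> sigmaV \<Rightarrow> real" where
  "normV N S = sqrt (L2sq N (sq S) + L2sq N (sp S) + vecsq (nE N) (sPp S) + vecsq (nE N) (sPm S)
      + vecsq (nE N) (sQp S) + vecsq (nE N) (sQm S) + (norm (salpha S))\<^sup>2 + (norm (sbeta S))\<^sup>2)"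

definition normM :: "network \<Rightarrow> psiM \<Rightarrow> real" where
  "normM N P = sqrt (H1sq N (pv P) + H1sq N (pw P) + vecsq (nV N) (pV P) + vecsq (nV N) (pW P))"

definition Aplus :: "network \<Rightarrow> (nat \<Rightarrow> real^3) \<Rightarrow> nat \<Rightarrow> real^3" where
  "Aplus N P j = (\<Sum>i | i < nE N \<and> tgt N i = j. P i)"

definition Aminus :: "network \<Rightarrow> (nat \<Rightarrow> real^3) \<Rightarrow> nat \<Rightarrow> real^3" where
  "Aminus N P j = (\<Sum>i | i < nE N \<and> src N i = j. P i)"

definition netint :: "network \<Rightarrow> (nat \<Rightarrow> real \<Rightarrow> real^3) \<Rightarrow> real^3" where
  "netint N f = (\<Sum>i<nE N. integral {0..ell N i} (f i))"

definition bform :: "network \<Rightarrow> sigmaV \<Rightarrow> psiM \<Rightarrow> real" where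
  "bform N S P =
     (\<Sum>i<nE N. integral {0..ell N i} (\<lambda>s.
         - (sp S i s \<bullet> (vector_derivative (pv P i) (at s) + cross3 (tan N i) (pw P i s)))
         - sq S i s \<bullet> vector_derivative (pw P i) (at s)))
   + (\<Sum>i<nE N. sPp S i \<bullet> pv P i (ell N i) - sPm S i \<bullet> pv P i 0)
   + (\<Sum>i<nE N. sQp S i \<bullet> pw P i (ell N i) - sQm S i \<bullet> pw P i 0)
   - (\<Sum>j<nV N. (Aplus N (sPp S) j - Aminus N (sPm S) j) \<bullet> pV P j)
   - (\<Sum>j<nV N. (Aplus N (sQp S) j - Aminus N (sQm S) j) \<bullet> pW P j)
   + salpha S \<bullet> netint N (pv P) + sbeta S \<bullet> netint N (pw P)"

end

theory Submission
  imports Defs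
begin


definition polyc :: "nat \<Rightarrow> (nat \<Rightarrow> real^3) \<Rightarrow> real \<Rightarrow> real^3" where
  "polyc m c s = (\<Sum>j\<le>m. s ^ j *\<^sub>R c j)"

definition dcoef :: "nat \<Rightarrow> (nat \<Rightarrow> real^3) \<Rightarrow> nat \<Rightarrow> real^3" where
  "dcoef m c j = (if j < m then real (Suc j) *\<^sub>R c (Suc j) else 0)"

lemma polyc_Suc: "polyc (Suc m) c s = polyc m c s + s ^ Suc m *\<^sub>R c (Suc m)"
  by (simp add: polyc_def)

lemma polyc_cong: "(\<And>j. j \<le> m \<Longrightarrow> c j = d j) \<Longrightarrow> polyc m c s = polyc m d s"
  by (simp add: polyc_def)

lemma polyc_has_vd:
  "(polyc m c has_vector_derivative polyc m (dcoef m c) s) (at s)"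
proof (induction m)
  case 0
  show ?case by (simp add: polyc_def dcoef_def)
next
  case (Suc m)
  have e: "polyc (Suc m) (dcoef (Suc m) c) s = polyc m (dcoef m c) s + s ^ m *\<^sub>R (real (Suc m) *\<^sub>R c (Suc m))"
  proof -
    have "polyc (Suc m) (dcoef (Suc m) c) s = polyc m (dcoef (Suc m) c) s"
      by (simp add: polyc_Suc dcoef_def)
    also have "\<dots> = polyc m (\<lambda>j. dcoef m c j + (if j = m then real (Suc m) *\<^sub>R c (Suc m) else 0)) s"
      by (rule polyc_cong) (auto simp: dcoef_def)
    also have "\<dots> = polyc m (dcoef m c) s + s ^ m *\<^sub>R (real (Suc m) *\<^sub>R c (Suc m))"
      by (simp add: polyc_def scaleR_add_right sum.distrib if_distrib[of "\<lambda>x. s ^ _ *\<^sub>R x"] sum.delta cong: if_cong)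
    finally show ?thesis .
  qed
  have d: "((\<lambda>s. s ^ Suc m *\<^sub>R c (Suc m)) has_vector_derivative (real (Suc m) * s ^ m) *\<^sub>R c (Suc m)) (at s)"
    using has_vector_derivative_scaleR[OF DERIV_pow[of "Suc m" s] has_vector_derivative_const[of "c (Suc m)"]] by simp
  have "((\<lambda>s. polyc m c s + s^Suc m *\<^sub>R c (Suc m)) has_vector_derivative
     polyc m (dcoef m c) s + (real (Suc m) * s^m) *\<^sub>R c (Suc m)) (at s)"
    by (rule has_vector_derivative_add[OF Suc d])
  moreover have "(\<lambda>s. polyc m c s + s^Suc m *\<^sub>R c (Suc m)) = polyc (Suc m) c"
    by (simp add: polyc_Suc fun_eq_iff)
  moreover have "polyc m (dcoef m c) s + (real (Suc m) * s^m) *\<^sub>R c (Suc m) = polyc (Suc m) (dcoef (Suc m) c) s"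
    using e by (simp add: mult.commute)
  ultimately show ?case by simp
qed

lemma vd_polyc: "vector_derivative (polyc m c) (at s) = polyc m (dcoef m c) s"
  by (rule vector_derivative_at[OF polyc_has_vd])

lemma continuous_on_polyc[continuous_intros]: "continuous_on S (polyc m c)"
  unfolding polyc_def[abs_def] by (intro continuous_intros)

lemma polyc_component: "polyc m c s $ a = (\<Sum>j\<le>m. c j $ a * s ^ j)"
  by (simp add: polyc_def mult.commute)

lemma psum_cont[continuous_intros]: "continuous_on S (\<lambda>s::real. (\<Sum>j\<le>m. d j * s ^ j))"
  by (intro continuous_intros)

lemma L0s:
  fixes d :: "nat \<Rightarrow> real"
  assumes l: "0 < l" and I: "integral {0..l} (\<lambda>s. (\<Sum>j\<le>m. d j * s ^ j)^2) = 0"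
  shows "\<forall>j\<le>m. d j = 0"
proof (rule ccontr)
  assume "\<not> (\<forall>j\<le>m. d j = 0)"
  then have fin: "finite {z. (\<Sum>i\<le>m. d i * z^i) = 0}"
    by (intro polyfun_rootbound_finite) auto
  have cont: "continuous_on (cbox 0 l) (\<lambda>s. (\<Sum>j\<le>m. d j * s ^ j)^2)"
    by (intro continuous_intros)
  have hi: "((\<lambda>s. (\<Sum>j\<le>m. d j * s ^ j)^2) has_integral 0) (cbox 0 l)"
    using integrable_integral[OF integrable_continuous_real[of 0 l "\<lambda>s. (\<Sum>j\<le>m. d j * s ^ j)^2"]] cont I
    by (simp add: cbox_interval)
  have "{0..l} \<subseteq> {z. (\<Sum>i\<le>m. d i * z^i) = 0}"
  proof
    fix x assume x: "x \<in> {0..l}"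
    have "(\<Sum>j\<le>m. d j * x ^ j)^2 = 0"
      using has_integral_0_cbox_imp_0[OF cont _ hi, of x] x l by (auto simp: cbox_interval)
    then show "x \<in> {z. (\<Sum>i\<le>m. d i * z^i) = 0}" by simp
  qed
  with fin have "finite {0..l}" by (rule finite_subset[rotated])
  with l show False using infinite_Icc by blast
qed

lemma orth_poly:
  fixes d :: "nat \<Rightarrow> real"
  assumes l: "0 < l"
    and O: "\<And>j. j \<le> m \<Longrightarrow> integral {0..l} (\<lambda>s. s ^ j * (\<Sum>i\<le>m. d i * s ^ i)) = 0"
  shows "\<forall>j\<le>m. d j = 0"
proof (rule L0s[OF l])
  let ?h = "\<lambda>s::real. (\<Sum>i\<le>m. d i * s ^ i)"
  have eq: "(\<lambda>s. (?h s)^2) = (\<lambda>s. \<Sum>j\<le>m. d j * (s ^ j * ?h s))"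
    by (simp add: fun_eq_iff power2_eq_square sum_distrib_right mult.assoc)
  have "integral {0..l} (\<lambda>s. \<Sum>j\<le>m. d j * (s ^ j * ?h s)) = (\<Sum>j\<le>m. integral {0..l} (\<lambda>s. d j * (s ^ j * ?h s)))"
    by (rule integral_sum) (auto intro!: integrable_continuous_real continuous_intros)
  also have "\<dots> = (\<Sum>j\<le>m. d j * integral {0..l} (\<lambda>s. s ^ j * ?h s))"
    by (intro sum.cong refl, subst integral_mult) (auto intro!: integrable_continuous_real continuous_intros)
  also have "\<dots> = 0" using O by simp
  finally show "integral {0..l} (\<lambda>s. (?h s)^2) = 0" by (simp add: eq)
qed



type_synonym coord = "(nat \<Rightarrow> nat \<Rightarrow> real^3) \<times> (nat \<Rightarrow> nat \<Rightarrow> real^3) \<times> (nat \<Rightarrow> real^3) \<times> (nat \<Rightarrow> real^3)"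

definition xv :: "coord \<Rightarrow> nat \<Rightarrow> nat \<Rightarrow> real^3" where "xv x = fst x"
definition xw :: "coord \<Rightarrow> nat \<Rightarrow> nat \<Rightarrow> real^3" where "xw x = fst (snd x)"
definition xV :: "coord \<Rightarrow> nat \<Rightarrow> real^3" where "xV x = fst (snd (snd x))"
definition xW :: "coord \<Rightarrow> nat \<Rightarrow> real^3" where "xW x = snd (snd (snd x))"

lemma cont_xv[continuous_intros]: "continuous_on S (\<lambda>x. xv x i j)"
  unfolding xv_def
  by (rule continuous_on_product_then_coordinatewise[where f="\<lambda>x. fst x i"],
      rule continuous_on_product_then_coordinatewise[where f="fst"], intro continuous_intros)
lemma cont_xw[continuous_intros]: "continuous_on S (\<lambda>x. xw x i j)"
  unfolding xw_def
  by (rule continuous_on_product_then_coordinatewise[where f="\<lambda>x. fst (snd x) i"],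
      rule continuous_on_product_then_coordinatewise[where f="\<lambda>x. fst (snd x)"], intro continuous_intros)
lemma cont_xV[continuous_intros]: "continuous_on S (\<lambda>x. xV x j)"
  unfolding xV_def
  by (rule continuous_on_product_then_coordinatewise[where f="\<lambda>x. fst (snd (snd x))"], intro continuous_intros)
lemma cont_xW[continuous_intros]: "continuous_on S (\<lambda>x. xW x j)"
  unfolding xW_def
  by (rule continuous_on_product_then_coordinatewise[where f="\<lambda>x. snd (snd (snd x))"], intro continuous_intros)

definition mkM :: "network \<Rightarrow> nat \<Rightarrow> coord \<Rightarrow> psiM" where
  "mkM N n x = \<lparr>pv = (\<lambda>i. if i < nE N then polyc n (xv x i) else (\<lambda>s. 0)),
                pw = (\<lambda>i. if i < nE N then polyc n (xw x i) else (\<lambda>s. 0)),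
                pV = (\<lambda>j. if j < nV N then xV x j else 0),
                pW = (\<lambda>j. if j < nV N then xW x j else 0)\<rparr>"

definition smul :: "real \<Rightarrow> coord \<Rightarrow> coord" where
  "smul t x = ((\<lambda>i j. t *\<^sub>R xv x i j), (\<lambda>i j. t *\<^sub>R xw x i j), (\<lambda>j. t *\<^sub>R xV x j), (\<lambda>j. t *\<^sub>R xW x j))"

lemma smul_simps[simp]: "xv (smul t x) i j = t *\<^sub>R xv x i j" "xw (smul t x) i j = t *\<^sub>R xw x i j"
  "xV (smul t x) j = t *\<^sub>R xV x j" "xW (smul t x) j = t *\<^sub>R xW x j"
  by (simp_all add: smul_def xv_def xw_def xV_def xW_def)

lemma smul_smul: "smul a (smul b x) = smul (a * b) x"
  by (simp add: smul_def xv_def xw_def xV_def xW_def)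

lemma smul_one: "smul 1 x = x"
  by (simp add: smul_def xv_def xw_def xV_def xW_def)

definition cs :: "network \<Rightarrow> nat \<Rightarrow> coord \<Rightarrow> real" where
  "cs N n x = (\<Sum>i<nE N. \<Sum>j\<le>n. (norm (xv x i j))\<^sup>2) + (\<Sum>i<nE N. \<Sum>j\<le>n. (norm (xw x i j))\<^sup>2)
     + (\<Sum>j<nV N. (norm (xV x j))\<^sup>2) + (\<Sum>j<nV N. (norm (xW x j))\<^sup>2)"

lemma cs_smul: "cs N n (smul t x) = t\<^sup>2 * cs N n x"
  by (simp add: cs_def sum_distrib_left power_mult_distrib distrib_left)

lemma cs_nonneg: "0 \<le> cs N n x"
  by (simp add: cs_def sum_nonneg)

lemma cont_cs: "continuous_on S (cs N n)"
  unfolding cs_def[abs_def] by (intro continuous_intros)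

definition supp :: "network \<Rightarrow> nat \<Rightarrow> coord \<Rightarrow> bool" where
  "supp N n x \<longleftrightarrow> (\<forall>i j. (nE N \<le> i \<or> n < j) \<longrightarrow> xv x i j = 0 \<and> xw x i j = 0) \<and>
                  (\<forall>j. nV N \<le> j \<longrightarrow> xV x j = 0 \<and> xW x j = 0)"

definition Kset :: "network \<Rightarrow> nat \<Rightarrow> coord set" where
  "Kset N n = {x. supp N n x \<and> cs N n x = 1}"

lemma compact_fun:
  fixes S :: "'i \<Rightarrow> 'a::topological_space set"
  assumes "\<And>i. compact (S i)"
  shows "compact {f. \<forall>i. f i \<in> S i}"
proof -
  have "compactin (product_topology (\<lambda>i. euclidean) UNIV) (PiE UNIV S)"
    using assms by (simp add: compactin_PiE)
  moreover have "PiE UNIV S = {f. \<forall>i. f i \<in> S i}"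
    by (auto simp: PiE_UNIV_domain Pi_def)
  ultimately show ?thesis by (simp add: euclidean_product_topology)
qed

lemma closed_supp: "closed {x. supp N n x}"
proof -
  have "{x. supp N n x} = (\<Inter>i. \<Inter>j. {x. (nE N \<le> i \<or> n < j) \<longrightarrow> xv x i j = 0 \<and> xw x i j = 0})
        \<inter> (\<Inter>j. {x. nV N \<le> j \<longrightarrow> xV x j = 0 \<and> xW x j = 0})"
    by (auto simp: supp_def)
  moreover have "closed {x. (nE N \<le> i \<or> n < j) \<longrightarrow> xv x i j = 0 \<and> xw x i j = 0}" for i j
  proof (cases "nE N \<le> i \<or> n < j")
    case True
    then show ?thesis
      by (simp add: Collect_conj_eq, intro closed_Int closed_Collect_eq continuous_intros)
  qed simp
  moreover have "closed {x. nV N \<le> j \<longrightarrow> xV x j = 0 \<and> xW x j = 0}" for j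
  proof (cases "nV N \<le> j")
    case True
    then show ?thesis
      by (simp add: Collect_conj_eq, intro closed_Int closed_Collect_eq continuous_intros)
  qed simp
  ultimately show ?thesis by (simp add: closed_INT closed_Int)
qed

definition Box :: "coord set" where
  "Box = {f. \<forall>i. f i \<in> {g. \<forall>j. g j \<in> cball (0::real^3) 1}} \<times> {f. \<forall>i. f i \<in> {g. \<forall>j. g j \<in> cball (0::real^3) 1}}
     \<times> {f. \<forall>i. f i \<in> cball (0::real^3) 1} \<times> {f. \<forall>i. f i \<in> cball (0::real^3) 1}"

lemma compact_Box: "compact Box"
  unfolding Box_def
  by (intro compact_Times compact_fun compact_cball)

lemma sq_le_sum: "finite A \<Longrightarrow> a \<in> A \<Longrightarrow> (\<And>b. b \<in> A \<Longrightarrow> 0 \<le> f b) \<Longrightarrow> f a \<le> (\<Sum>b\<in>A. (f b::real))"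
  by (rule member_le_sum) auto

lemma norm_le1: "(norm (v::real^3))\<^sup>2 \<le> 1 \<Longrightarrow> norm v \<le> 1"
  using power2_le_imp_le[of "norm v" 1] by simp

lemma Kset_Box: "Kset N n \<subseteq> Box"
proof
  fix x assume x: "x \<in> Kset N n"
  then have s: "supp N n x" and c: "cs N n x = 1" by (auto simp: Kset_def)
  have A: "(\<Sum>i<nE N. \<Sum>j\<le>n. (norm (xv x i j))\<^sup>2) \<le> 1" "(\<Sum>i<nE N. \<Sum>j\<le>n. (norm (xw x i j))\<^sup>2) \<le> 1"
    "(\<Sum>j<nV N. (norm (xV x j))\<^sup>2) \<le> 1" "(\<Sum>j<nV N. (norm (xW x j))\<^sup>2) \<le> 1"
  proof -
    have "0 \<le> (\<Sum>i<nE N. \<Sum>j\<le>n. (norm (xv x i j))\<^sup>2)" "0 \<le> (\<Sum>i<nE N. \<Sum>j\<le>n. (norm (xw x i j))\<^sup>2)"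
    "0 \<le> (\<Sum>j<nV N. (norm (xV x j))\<^sup>2)" "0 \<le> (\<Sum>j<nV N. (norm (xW x j))\<^sup>2)"
      by (auto intro!: sum_nonneg)
    then show "(\<Sum>i<nE N. \<Sum>j\<le>n. (norm (xv x i j))\<^sup>2) \<le> 1" "(\<Sum>i<nE N. \<Sum>j\<le>n. (norm (xw x i j))\<^sup>2) \<le> 1"
    "(\<Sum>j<nV N. (norm (xV x j))\<^sup>2) \<le> 1" "(\<Sum>j<nV N. (norm (xW x j))\<^sup>2) \<le> 1"
      using c unfolding cs_def by linarith+
  qed
  have v: "norm (xv x i j) \<le> 1" "norm (xw x i j) \<le> 1" for i j
  proof -
    show "norm (xv x i j) \<le> 1"
    proof (cases "nE N \<le> i \<or> n < j")
      case True then show ?thesis using s unfolding supp_def by force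
    next
      case False
      then have "(norm (xv x i j))\<^sup>2 \<le> (\<Sum>j\<le>n. (norm (xv x i j))\<^sup>2)"
        by (intro sq_le_sum[where f="\<lambda>j. (norm (xv x i j))\<^sup>2"]) auto
      also have "\<dots> \<le> (\<Sum>i<nE N. \<Sum>j\<le>n. (norm (xv x i j))\<^sup>2)"
        using False by (intro sq_le_sum[where f="\<lambda>i. \<Sum>j\<le>n. (norm (xv x i j))\<^sup>2"]) (auto intro: sum_nonneg)
      finally show ?thesis using A norm_le1 by (meson order_trans)
    qed
    show "norm (xw x i j) \<le> 1"
    proof (cases "nE N \<le> i \<or> n < j")
      case True then show ?thesis using s unfolding supp_def by force
    next
      case False
      then have "(norm (xw x i j))\<^sup>2 \<le> (\<Sum>j\<le>n. (norm (xw x i j))\<^sup>2)"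
        by (intro sq_le_sum[where f="\<lambda>j. (norm (xw x i j))\<^sup>2"]) auto
      also have "\<dots> \<le> (\<Sum>i<nE N. \<Sum>j\<le>n. (norm (xw x i j))\<^sup>2)"
        using False by (intro sq_le_sum[where f="\<lambda>i. \<Sum>j\<le>n. (norm (xw x i j))\<^sup>2"]) (auto intro: sum_nonneg)
      finally show ?thesis using A norm_le1 by (meson order_trans)
    qed
  qed
  have V: "norm (xV x j) \<le> 1" "norm (xW x j) \<le> 1" for j
  proof -
    show "norm (xV x j) \<le> 1"
    proof (cases "nV N \<le> j")
      case True then show ?thesis using s unfolding supp_def by force
    next
      case False
      then have "(norm (xV x j))\<^sup>2 \<le> (\<Sum>j<nV N. (norm (xV x j))\<^sup>2)"
        by (intro sq_le_sum[where f="\<lambda>j. (norm (xV x j))\<^sup>2"]) auto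
      then show ?thesis using A norm_le1 by (meson order_trans)
    qed
    show "norm (xW x j) \<le> 1"
    proof (cases "nV N \<le> j")
      case True then show ?thesis using s unfolding supp_def by force
    next
      case False
      then have "(norm (xW x j))\<^sup>2 \<le> (\<Sum>j<nV N. (norm (xW x j))\<^sup>2)"
        by (intro sq_le_sum[where f="\<lambda>j. (norm (xW x j))\<^sup>2"]) auto
      then show ?thesis using A norm_le1 by (meson order_trans)
    qed
  qed
  show "x \<in> Box"
    using v V unfolding Box_def mem_Times_iff xv_def xw_def xV_def xW_def by simp
qed

lemma compact_Kset: "compact (Kset N n)"
proof -
  have "Kset N n = Box \<inter> ({x. supp N n x} \<inter> {x. cs N n x = 1})"
    using Kset_Box by (auto simp: Kset_def)
  moreover have "closed ({x. supp N n x} \<inter> {x. cs N n x = 1})"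
    by (intro closed_Int closed_supp closed_Collect_eq cont_cs continuous_intros)
  ultimately show ?thesis using compact_Box by (simp add: compact_Int_closed)
qed



lemma integral_mult_const: "integral S (\<lambda>s. a * f s) = a * integral S (f :: _ \<Rightarrow> real)"
  using integral_cmul[of S a f] by simp

lemma int_cont_real: "continuous_on {a..b} (f::real \<Rightarrow> 'b::banach) \<Longrightarrow> f integrable_on {a..b}"
  by (rule integrable_continuous_real)

lemma IF1: "integral {0..l} (\<lambda>s. s ^ e * (polyc m c s $ a)) = (\<Sum>j\<le>m. c j $ a * integral {0..l} (\<lambda>s. s ^ (e + j)))"
proof -
  have eq: "(\<lambda>s. s ^ e * (polyc m c s $ a)) = (\<lambda>s. \<Sum>j\<le>m. c j $ a * s ^ (e + j))"
    by (simp add: fun_eq_iff polyc_component sum_distrib_left power_add mult.left_commute)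
  have "integral {0..l} (\<lambda>s. s ^ e * (polyc m c s $ a)) = (\<Sum>j\<le>m. integral {0..l} (\<lambda>s. c j $ a * s ^ (e + j)))"
    unfolding eq by (intro integral_sum) (auto intro!: int_cont_real continuous_intros)
  then show ?thesis by (simp add: integral_mult_const)
qed

lemma norm3_sq: "(norm (v::real^3))\<^sup>2 = (\<Sum>a\<in>UNIV. (v $ a)\<^sup>2)"
  unfolding power2_norm_eq_inner inner_vec_def by (simp add: power2_eq_square)

lemma IF2: "integral {0..l} (\<lambda>s. (norm (polyc m c s))\<^sup>2) =
   (\<Sum>a\<in>UNIV. \<Sum>j\<le>m. c j $ a * integral {0..l} (\<lambda>s. s ^ j * (polyc m c s $ a)))"
proof -
  have "(\<lambda>s. (norm (polyc m c s))\<^sup>2) = (\<lambda>s. \<Sum>a\<in>UNIV. \<Sum>j\<le>m. c j $ a * (s ^ j * (polyc m c s $ a)))"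
    apply (rule ext)
    apply (subst norm3_sq)
    apply (rule sum.cong[OF refl])
    apply (subst (1) power2_eq_square)
    apply (subst (1) polyc_component)
    by (simp add: sum_distrib_left mult_ac)
  then have "integral {0..l} (\<lambda>s. (norm (polyc m c s))\<^sup>2) =
     (\<Sum>a\<in>UNIV. integral {0..l} (\<lambda>s. \<Sum>j\<le>m. c j $ a * (s ^ j * (polyc m c s $ a))))"
    by (simp only:, intro integral_sum) (auto intro!: int_cont_real continuous_intros)
  also have "\<dots> = (\<Sum>a\<in>UNIV. \<Sum>j\<le>m. integral {0..l} (\<lambda>s. c j $ a * (s ^ j * (polyc m c s $ a))))"
    by (intro sum.cong refl integral_sum) (auto intro!: int_cont_real continuous_intros)
  finally show ?thesis by (simp add: integral_mult_const)
qed

lemma cont_IF1: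
  assumes "\<And>j. continuous_on S (\<lambda>x. c x j)"
  shows "continuous_on S (\<lambda>x. integral {0..l} (\<lambda>s. s ^ e * (polyc m (c x) s $ a)))"
  unfolding IF1 by (intro continuous_intros assms)

lemma cont_IF2:
  assumes "\<And>j. continuous_on S (\<lambda>x. c x j)"
  shows "continuous_on S (\<lambda>x. integral {0..l} (\<lambda>s. (norm (polyc m (c x) s))\<^sup>2))"
  unfolding IF2 by (intro continuous_intros assms cont_IF1)

lemma cont_dcoef:
  assumes "\<And>j. continuous_on S (\<lambda>x. c x j)"
  shows "continuous_on S (\<lambda>x. dcoef m (c x) j)"
  by (cases "j < m") (auto simp: dcoef_def intro!: continuous_intros assms)

lemma polyc_scale: "polyc m (\<lambda>j. t *\<^sub>R c j) s = t *\<^sub>R polyc m c s"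
  by (simp add: polyc_def scaleR_sum_right mult.commute)

lemma dcoef_scale: "dcoef m (\<lambda>j. t *\<^sub>R c j) = (\<lambda>j. t *\<^sub>R dcoef m c j)"
  by (simp add: fun_eq_iff dcoef_def)

lemma polyc_scale': "polyc m (\<lambda>j. t *\<^sub>R c j) = (\<lambda>s. t *\<^sub>R polyc m c s)"
  by (simp add: fun_eq_iff polyc_scale)

lemma xv_smul_fun: "xv (smul t x) i = (\<lambda>j. t *\<^sub>R xv x i j)" and xw_smul_fun: "xw (smul t x) i = (\<lambda>j. t *\<^sub>R xw x i j)"
  by (simp_all add: fun_eq_iff)

lemma int_polyc: "(\<lambda>s. f (polyc m c s) :: real) integrable_on {0..l}" if "continuous_on UNIV f" for f
  by (intro int_cont_real continuous_on_compose2[OF that]) (auto intro!: continuous_intros)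

lemma H1sq_mkM_v: "H1sq N (pv (mkM N n x)) = (\<Sum>i<nE N. integral {0..ell N i} (\<lambda>s. (norm (polyc n (xv x i) s))\<^sup>2)
      + integral {0..ell N i} (\<lambda>s. (norm (polyc n (dcoef n (xv x i)) s))\<^sup>2))"
  unfolding H1sq_def
proof (intro sum.cong refl)
  fix i assume "i \<in> {..<nE N}"
  then have "pv (mkM N n x) i = polyc n (xv x i)" by (simp add: mkM_def)
  then show "integral {0..ell N i} (\<lambda>s. (norm (pv (mkM N n x) i s))\<^sup>2 + (norm (vector_derivative (pv (mkM N n x) i) (at s)))\<^sup>2) =
    integral {0..ell N i} (\<lambda>s. (norm (polyc n (xv x i) s))\<^sup>2) + integral {0..ell N i} (\<lambda>s. (norm (polyc n (dcoef n (xv x i)) s))\<^sup>2)"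
    by (simp add: vd_polyc, intro integral_add) (auto intro!: int_cont_real continuous_intros)
qed

lemma H1sq_mkM_w: "H1sq N (pw (mkM N n x)) = (\<Sum>i<nE N. integral {0..ell N i} (\<lambda>s. (norm (polyc n (xw x i) s))\<^sup>2)
      + integral {0..ell N i} (\<lambda>s. (norm (polyc n (dcoef n (xw x i)) s))\<^sup>2))"
  unfolding H1sq_def
proof (intro sum.cong refl)
  fix i assume "i \<in> {..<nE N}"
  then have "pw (mkM N n x) i = polyc n (xw x i)" by (simp add: mkM_def)
  then show "integral {0..ell N i} (\<lambda>s. (norm (pw (mkM N n x) i s))\<^sup>2 + (norm (vector_derivative (pw (mkM N n x) i) (at s)))\<^sup>2) =
    integral {0..ell N i} (\<lambda>s. (norm (polyc n (xw x i) s))\<^sup>2) + integral {0..ell N i} (\<lambda>s. (norm (polyc n (dcoef n (xw x i)) s))\<^sup>2)"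
    by (simp add: vd_polyc, intro integral_add) (auto intro!: int_cont_real continuous_intros)
qed

lemma vecsq_mkM: "vecsq (nV N) (pV (mkM N n x)) = (\<Sum>j<nV N. (norm (xV x j))\<^sup>2)"
    "vecsq (nV N) (pW (mkM N n x)) = (\<Sum>j<nV N. (norm (xW x j))\<^sup>2)"
  by (simp_all add: vecsq_def mkM_def)

lemma cont_normM: "continuous_on S (\<lambda>x. normM N (mkM N n x))"
  unfolding normM_def H1sq_mkM_v H1sq_mkM_w vecsq_mkM
  by (intro continuous_intros cont_IF2 cont_dcoef)

lemma normM_smul: "normM N (mkM N n (smul t x)) = \<bar>t\<bar> * normM N (mkM N n x)"
proof -
  have e: "integral {0..l} (\<lambda>s. (norm (t *\<^sub>R f s))\<^sup>2) = t\<^sup>2 * integral {0..l} (\<lambda>s. (norm (f s))\<^sup>2)" for l and f :: "real \<Rightarrow> real^3"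
    by (simp add: power_mult_distrib integral_mult_const)
  have h1: "H1sq N (pv (mkM N n (smul t x))) = t\<^sup>2 * H1sq N (pv (mkM N n x))"
    "H1sq N (pw (mkM N n (smul t x))) = t\<^sup>2 * H1sq N (pw (mkM N n x))"
    "vecsq (nV N) (pV (mkM N n (smul t x))) = t\<^sup>2 * vecsq (nV N) (pV (mkM N n x))"
    "vecsq (nV N) (pW (mkM N n (smul t x))) = t\<^sup>2 * vecsq (nV N) (pW (mkM N n x))"
    unfolding H1sq_mkM_v H1sq_mkM_w vecsq_mkM
    by (simp_all add: xv_smul_fun xw_smul_fun polyc_scale' dcoef_scale e power_mult_distrib
        sum_distrib_left distrib_left)
  show ?thesis
    unfolding normM_def h1
    by (simp add: distrib_left[symmetric] real_sqrt_mult)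
qed

lemma int_nn: "0 \<le> integral {0..l} (\<lambda>s. (norm (polyc m c s))\<^sup>2)"
  by (intro integral_nonneg int_cont_real) (auto intro!: continuous_intros)

lemma Z1:
  assumes l: "0 < l" and I: "integral {0..l} (\<lambda>s. (norm (polyc m c s))\<^sup>2) = 0"
  shows "\<forall>j\<le>m. c j = 0"
proof -
  have "c j $ a = 0" if j: "j \<le> m" for j a
  proof -
    have le: "integral {0..l} (\<lambda>s. (\<Sum>j\<le>m. c j $ a * s ^ j)^2) \<le> integral {0..l} (\<lambda>s. (norm (polyc m c s))\<^sup>2)"
    proof (rule integral_le)
      show "(\<lambda>s. (\<Sum>j\<le>m. c j $ a * s ^ j)^2) integrable_on {0..l}"
        by (intro int_cont_real continuous_intros)
      show "(\<lambda>s. (norm (polyc m c s))\<^sup>2) integrable_on {0..l}"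
        by (intro int_cont_real) (auto intro!: continuous_intros)
      fix s
      have "\<bar>polyc m c s $ a\<bar> \<le> norm (polyc m c s)" by (rule component_le_norm_cart)
      then have "(polyc m c s $ a)^2 \<le> (norm (polyc m c s))\<^sup>2"
        by (metis abs_ge_zero power2_abs power_mono)
      then show "(\<Sum>j\<le>m. c j $ a * s ^ j)^2 \<le> (norm (polyc m c s))\<^sup>2"
        by (simp add: polyc_component)
    qed
    have ge: "0 \<le> integral {0..l} (\<lambda>s. (\<Sum>j\<le>m. c j $ a * s ^ j)^2)"
      by (intro integral_nonneg int_cont_real continuous_intros) auto
    from le ge I have "integral {0..l} (\<lambda>s. (\<Sum>j\<le>m. c j $ a * s ^ j)^2) = 0" by linarith
    from L0s[OF l this] j show ?thesis by simp
  qed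
  then show ?thesis by (simp add: vec_eq_iff)
qed

lemma sum_nn_0: "finite A \<Longrightarrow> (\<And>i. i \<in> A \<Longrightarrow> 0 \<le> f i) \<Longrightarrow> (\<Sum>i\<in>A. f i) = (0::real) \<Longrightarrow> i \<in> A \<Longrightarrow> f i = 0"
  using sum_nonneg_eq_0_iff by blast

lemma normM_pos:
  assumes ell: "\<And>i. i < nE N \<Longrightarrow> 0 < ell N i" and s: "supp N n x" and c: "cs N n x \<noteq> 0"
  shows "0 < normM N (mkM N n x)"
proof (rule ccontr)
  assume "\<not> 0 < normM N (mkM N n x)"
  note nn = this
  let ?A = "\<Sum>i<nE N. integral {0..ell N i} (\<lambda>s. (norm (polyc n (xv x i) s))\<^sup>2)
      + integral {0..ell N i} (\<lambda>s. (norm (polyc n (dcoef n (xv x i)) s))\<^sup>2)"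
  let ?B = "\<Sum>i<nE N. integral {0..ell N i} (\<lambda>s. (norm (polyc n (xw x i) s))\<^sup>2)
      + integral {0..ell N i} (\<lambda>s. (norm (polyc n (dcoef n (xw x i)) s))\<^sup>2)"
  let ?C = "\<Sum>j<nV N. (norm (xV x j))\<^sup>2"
  let ?D = "\<Sum>j<nV N. (norm (xW x j))\<^sup>2"
  have nA: "0 \<le> ?A" and nB: "0 \<le> ?B" and nC: "0 \<le> ?C" and nD: "0 \<le> ?D"
    by (auto intro!: sum_nonneg add_nonneg_nonneg int_nn)
  have "normM N (mkM N n x) = sqrt (?A + ?B + ?C + ?D)"
    unfolding normM_def H1sq_mkM_v H1sq_mkM_w vecsq_mkM ..
  with nn have "?A + ?B + ?C + ?D = 0"
    using nA nB nC nD by simp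
  then have A0: "?A = 0" and B0: "?B = 0" and C0: "?C = 0" and D0: "?D = 0"
    using nA nB nC nD by linarith+
  have xv0: "xv x i j = 0" and xw0: "xw x i j = 0" for i j
  proof -
    show "xv x i j = 0"
    proof (cases "i < nE N \<and> j \<le> n")
      case True
      have "integral {0..ell N i} (\<lambda>s. (norm (polyc n (xv x i) s))\<^sup>2)
      + integral {0..ell N i} (\<lambda>s. (norm (polyc n (dcoef n (xv x i)) s))\<^sup>2) = 0"
        using sum_nn_0[OF _ _ A0, of i] True by (auto intro!: add_nonneg_nonneg int_nn)
      then have "integral {0..ell N i} (\<lambda>s. (norm (polyc n (xv x i) s))\<^sup>2) = 0"
        using int_nn[of "ell N i" n "xv x i"] int_nn[of "ell N i" n "dcoef n (xv x i)"] by linarith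
      from Z1[OF ell this] True show ?thesis by simp
    next
      case False then show ?thesis using s unfolding supp_def by force
    qed
    show "xw x i j = 0"
    proof (cases "i < nE N \<and> j \<le> n")
      case True
      have "integral {0..ell N i} (\<lambda>s. (norm (polyc n (xw x i) s))\<^sup>2)
      + integral {0..ell N i} (\<lambda>s. (norm (polyc n (dcoef n (xw x i)) s))\<^sup>2) = 0"
        using sum_nn_0[OF _ _ B0, of i] True by (auto intro!: add_nonneg_nonneg int_nn)
      then have "integral {0..ell N i} (\<lambda>s. (norm (polyc n (xw x i) s))\<^sup>2) = 0"
        using int_nn[of "ell N i" n "xw x i"] int_nn[of "ell N i" n "dcoef n (xw x i)"] by linarith
      from Z1[OF ell this] True show ?thesis by simp
    next
      case False then show ?thesis using s unfolding supp_def by force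
    qed
  qed
  have "xV x j = 0" "xW x j = 0" for j
  proof -
    show "xV x j = 0"
    proof (cases "j < nV N")
      case True
      then show ?thesis using sum_nn_0[OF _ _ C0, of j] by auto
    next
      case False then show ?thesis using s unfolding supp_def by force
    qed
    show "xW x j = 0"
    proof (cases "j < nV N")
      case True
      then show ?thesis using sum_nn_0[OF _ _ D0, of j] by auto
    next
      case False then show ?thesis using s unfolding supp_def by force
    qed
  qed
  then have "cs N n x = 0" using xv0 xw0 by (simp add: cs_def)
  with c show False by simp
qed

lemma Mn_coords:
  assumes P: "P \<in> Mn N n"
  shows "\<exists>x. supp N n x \<and> mkM N n x = P"
proof -
  have hv: "\<forall>i<nE N. \<exists>c. \<forall>s. pv P i s = polyc n c s" and hw: "\<forall>i<nE N. \<exists>c. \<forall>s. pw P i s = polyc n c s"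
    using P unfolding Mn_def Pm_net_def polyfun_def polyc_def by auto
  obtain cv where cv: "\<forall>i<nE N. \<forall>s. pv P i s = polyc n (cv i) s" using hv by metis
  obtain cw where cw: "\<forall>i<nE N. \<forall>s. pw P i s = polyc n (cw i) s" using hw by metis
  have z: "\<forall>i\<ge>nE N. pv P i = (\<lambda>_. 0)" "\<forall>i\<ge>nE N. pw P i = (\<lambda>_. 0)"
    "\<forall>j\<ge>nV N. pV P j = 0" "\<forall>j\<ge>nV N. pW P j = 0"
    using P unfolding Mn_def Pm_net_def blockvec_def by auto
  define x :: coord where "x = ((\<lambda>i j. if i < nE N \<and> j \<le> n then cv i j else 0),
     (\<lambda>i j. if i < nE N \<and> j \<le> n then cw i j else 0),
     (\<lambda>j. if j < nV N then pV P j else 0), (\<lambda>j. if j < nV N then pW P j else 0))"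
  have s: "supp N n x" by (auto simp: supp_def x_def xv_def xw_def xV_def xW_def)
  have pv: "pv (mkM N n x) = pv P"
  proof (rule ext)
    fix i show "pv (mkM N n x) i = pv P i"
    proof (cases "i < nE N")
      case True
      have "polyc n (xv x i) = polyc n (cv i)"
        by (rule ext, rule polyc_cong) (simp add: x_def xv_def True)
      then show ?thesis using True cv by (simp add: mkM_def fun_eq_iff)
    qed (use z in \<open>simp add: mkM_def\<close>)
  qed
  have pw: "pw (mkM N n x) = pw P"
  proof (rule ext)
    fix i show "pw (mkM N n x) i = pw P i"
    proof (cases "i < nE N")
      case True
      have "polyc n (xw x i) = polyc n (cw i)"
        by (rule ext, rule polyc_cong) (simp add: x_def xw_def True)
      then show ?thesis using True cw by (simp add: mkM_def fun_eq_iff)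
    qed (use z in \<open>simp add: mkM_def\<close>)
  qed
  have pV: "pV (mkM N n x) = pV P" "pW (mkM N n x) = pW P"
    using z by (auto simp: mkM_def x_def xV_def xW_def fun_eq_iff)
  have "mkM N n x = P"
    using pv pw pV by (cases P) (simp add: mkM_def)
  with s show ?thesis by blast
qed

lemma mkM_zero:
  assumes s: "supp N n x" and c: "cs N n x = 0"
  shows "mkM N n x = zeroM"
proof -
  have nn: "0 \<le> (\<Sum>i<nE N. \<Sum>j\<le>n. (norm (xv x i j))\<^sup>2)" "0 \<le> (\<Sum>i<nE N. \<Sum>j\<le>n. (norm (xw x i j))\<^sup>2)"
    "0 \<le> (\<Sum>j<nV N. (norm (xV x j))\<^sup>2)" "0 \<le> (\<Sum>j<nV N. (norm (xW x j))\<^sup>2)"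
    by (auto intro!: sum_nonneg)
  then have z: "(\<Sum>i<nE N. \<Sum>j\<le>n. (norm (xv x i j))\<^sup>2) = 0" "(\<Sum>i<nE N. \<Sum>j\<le>n. (norm (xw x i j))\<^sup>2) = 0"
    "(\<Sum>j<nV N. (norm (xV x j))\<^sup>2) = 0" "(\<Sum>j<nV N. (norm (xW x j))\<^sup>2) = 0"
    using c unfolding cs_def by linarith+
  have v: "xv x i j = 0" "xw x i j = 0" if "i < nE N" "j \<le> n" for i j
  proof -
    have "(\<Sum>j\<le>n. (norm (xv x i j))\<^sup>2) = 0"
      using sum_nn_0[OF _ _ z(1), of i] that by (simp add: sum_nonneg)
    then show "xv x i j = 0" using sum_nn_0[of "{..n}" "\<lambda>j. (norm (xv x i j))\<^sup>2" j] that by auto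
    have "(\<Sum>j\<le>n. (norm (xw x i j))\<^sup>2) = 0"
      using sum_nn_0[OF _ _ z(2), of i] that by (simp add: sum_nonneg)
    then show "xw x i j = 0" using sum_nn_0[of "{..n}" "\<lambda>j. (norm (xw x i j))\<^sup>2" j] that by auto
  qed
  have V: "xV x j = 0" "xW x j = 0" if "j < nV N" for j
    using sum_nn_0[OF _ _ z(3), of j] sum_nn_0[OF _ _ z(4), of j] that by auto
  have p: "polyc n (xv x i) = (\<lambda>s. 0)" "polyc n (xw x i) = (\<lambda>s. 0)" if "i < nE N" for i
    using v[OF that] by (auto simp: polyc_def fun_eq_iff)
  show ?thesis
    using p V by (auto simp: mkM_def zeroM_def fun_eq_iff)
qed

definition bX :: "network \<Rightarrow> nat \<Rightarrow> sigmaV \<Rightarrow> coord \<Rightarrow> real" where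
 "bX N n S x =
   (\<Sum>i<nE N. integral {0..ell N i} (\<lambda>s.
         - (sp S i s \<bullet> (polyc n (dcoef n (xv x i)) s + cross3 (tan N i) (polyc n (xw x i) s)))
         - sq S i s \<bullet> polyc n (dcoef n (xw x i)) s))
   + (\<Sum>i<nE N. sPp S i \<bullet> polyc n (xv x i) (ell N i) - sPm S i \<bullet> polyc n (xv x i) 0)
   + (\<Sum>i<nE N. sQp S i \<bullet> polyc n (xw x i) (ell N i) - sQm S i \<bullet> polyc n (xw x i) 0)
   - (\<Sum>j<nV N. (Aplus N (sPp S) j - Aminus N (sPm S) j) \<bullet> xV x j)
   - (\<Sum>j<nV N. (Aplus N (sQp S) j - Aminus N (sQm S) j) \<bullet> xW x j)
   + salpha S \<bullet> (\<Sum>i<nE N. integral {0..ell N i} (polyc n (xv x i)))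
   + sbeta S \<bullet> (\<Sum>i<nE N. integral {0..ell N i} (polyc n (xw x i)))"

lemma bform_mkM: "bform N S (mkM N n x) = bX N n S x"
proof -
  have a: "(\<Sum>i<nE N. integral {0..ell N i} (\<lambda>s.
         - (sp S i s \<bullet> (vector_derivative (pv (mkM N n x) i) (at s) + cross3 (tan N i) (pw (mkM N n x) i s)))
         - sq S i s \<bullet> vector_derivative (pw (mkM N n x) i) (at s))) =
       (\<Sum>i<nE N. integral {0..ell N i} (\<lambda>s.
         - (sp S i s \<bullet> (polyc n (dcoef n (xv x i)) s + cross3 (tan N i) (polyc n (xw x i) s)))
         - sq S i s \<bullet> polyc n (dcoef n (xw x i)) s))"
    by (intro sum.cong refl) (simp add: mkM_def vd_polyc)
  have b: "(\<Sum>i<nE N. sPp S i \<bullet> pv (mkM N n x) i (ell N i) - sPm S i \<bullet> pv (mkM N n x) i 0) =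
     (\<Sum>i<nE N. sPp S i \<bullet> polyc n (xv x i) (ell N i) - sPm S i \<bullet> polyc n (xv x i) 0)"
    "(\<Sum>i<nE N. sQp S i \<bullet> pw (mkM N n x) i (ell N i) - sQm S i \<bullet> pw (mkM N n x) i 0) =
     (\<Sum>i<nE N. sQp S i \<bullet> polyc n (xw x i) (ell N i) - sQm S i \<bullet> polyc n (xw x i) 0)"
    "(\<Sum>j<nV N. (Aplus N (sPp S) j - Aminus N (sPm S) j) \<bullet> pV (mkM N n x) j) =
     (\<Sum>j<nV N. (Aplus N (sPp S) j - Aminus N (sPm S) j) \<bullet> xV x j)"
    "(\<Sum>j<nV N. (Aplus N (sQp S) j - Aminus N (sQm S) j) \<bullet> pW (mkM N n x) j) =
     (\<Sum>j<nV N. (Aplus N (sQp S) j - Aminus N (sQm S) j) \<bullet> xW x j)"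
    "netint N (pv (mkM N n x)) = (\<Sum>i<nE N. integral {0..ell N i} (polyc n (xv x i)))"
    "netint N (pw (mkM N n x)) = (\<Sum>i<nE N. integral {0..ell N i} (polyc n (xw x i)))"
    by (auto intro!: sum.cong simp: mkM_def netint_def)
  show ?thesis unfolding bform_def a b bX_def ..
qed

lemma integral_scale_fun: "(\<And>s. g s = t * f s) \<Longrightarrow> integral S g = t * integral S (f :: _ \<Rightarrow> real)"
proof -
  assume "\<And>s. g s = t * f s"
  then have "g = (\<lambda>s. t * f s)" by (simp add: fun_eq_iff)
  then show ?thesis by (simp add: integral_mult_const)
qed

lemma bX_smul: "bX N n S (smul t x) = t * bX N n S x"
proof -
  have i1: "integral {0..ell N i} (\<lambda>s.
         - (sp S i s \<bullet> (polyc n (dcoef n (xv (smul t x) i)) s + cross3 (tan N i) (polyc n (xw (smul t x) i) s)))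
         - sq S i s \<bullet> polyc n (dcoef n (xw (smul t x) i)) s) =
     t * integral {0..ell N i} (\<lambda>s.
         - (sp S i s \<bullet> (polyc n (dcoef n (xv x i)) s + cross3 (tan N i) (polyc n (xw x i) s)))
         - sq S i s \<bullet> polyc n (dcoef n (xw x i)) s)" for i
    by (rule integral_scale_fun)
       (simp add: xv_smul_fun xw_smul_fun dcoef_scale polyc_scale cross_mult_right algebra_simps inner_add_right)
  have i2: "integral {0..ell N i} (polyc n (xv (smul t x) i)) = t *\<^sub>R integral {0..ell N i} (polyc n (xv x i))"
    "integral {0..ell N i} (polyc n (xw (smul t x) i)) = t *\<^sub>R integral {0..ell N i} (polyc n (xw x i))" for i
    by (simp_all add: xv_smul_fun xw_smul_fun polyc_scale')
  show ?thesis
    unfolding bX_def i1 i2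
    by (simp add: xv_smul_fun xw_smul_fun polyc_scale sum_distrib_left scaleR_sum_right[symmetric]
        algebra_simps sum_subtractf)
qed

lemma bform_smul: "bform N S (mkM N n (smul t x)) = t * bform N S (mkM N n x)"
  by (simp add: bform_mkM bX_smul)



abbreviation eA :: "3 \<Rightarrow> real^3" where "eA a \<equiv> axis a 1"

lemma eA_inner: "(c *\<^sub>R eA a) \<bullet> v = c * v $ a" "eA a \<bullet> v = v $ a"
  by (simp_all add: inner_axis')

definition tq :: "nat \<Rightarrow> nat \<Rightarrow> 3 \<Rightarrow> sigmaV" where
  "tq i j a = zeroV\<lparr>sq := (\<lambda>i' s. if i' = i then s ^ j *\<^sub>R eA a else 0)\<rparr>"
definition tp :: "nat \<Rightarrow> nat \<Rightarrow> 3 \<Rightarrow> sigmaV" where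
  "tp i j a = zeroV\<lparr>sp := (\<lambda>i' s. if i' = i then s ^ j *\<^sub>R eA a else 0)\<rparr>"
definition tPp :: "nat \<Rightarrow> 3 \<Rightarrow> sigmaV" where
  "tPp i a = zeroV\<lparr>sPp := (\<lambda>i'. if i' = i then eA a else 0)\<rparr>"
definition tPm :: "nat \<Rightarrow> 3 \<Rightarrow> sigmaV" where
  "tPm i a = zeroV\<lparr>sPm := (\<lambda>i'. if i' = i then eA a else 0)\<rparr>"
definition tQp :: "nat \<Rightarrow> 3 \<Rightarrow> sigmaV" where
  "tQp i a = zeroV\<lparr>sQp := (\<lambda>i'. if i' = i then eA a else 0)\<rparr>"
definition tQm :: "nat \<Rightarrow> 3 \<Rightarrow> sigmaV" where
  "tQm i a = zeroV\<lparr>sQm := (\<lambda>i'. if i' = i then eA a else 0)\<rparr>"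
definition tal :: "3 \<Rightarrow> sigmaV" where
  "tal a = zeroV\<lparr>salpha := eA a\<rparr>"
definition tbe :: "3 \<Rightarrow> sigmaV" where
  "tbe a = zeroV\<lparr>sbeta := eA a\<rparr>"

lemma sum_single: "i < (n::nat) \<Longrightarrow> (\<Sum>i'<n. if i' = i then f i' else 0) = (f i :: 'a::comm_monoid_add)"
  by (subst sum.delta) auto

lemma sum_int_single: "i < (n::nat) \<Longrightarrow> (\<Sum>ia<n. integral (I ia) (\<lambda>s. if ia = i then g s else 0)) = integral (I i) g"
proof -
  assume i: "i < n"
  have "(\<Sum>ia<n. integral (I ia) (\<lambda>s. if ia = i then g s else 0)) = (\<Sum>ia<n. if ia = i then integral (I i) g else 0)"
    by (intro sum.cong refl) auto
  also have "\<dots> = integral (I i) g" using i by (subst sum.delta) auto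
  finally show ?thesis .
qed

lemma Aplus_single: "i < nE N \<Longrightarrow> Aplus N (\<lambda>i'. if i' = i then v else 0) j = (if tgt N i = j then v else 0)"
  unfolding Aplus_def by (auto simp: sum.delta[unfolded Collect_conj_eq] intro: sum.neutral)
lemma Aminus_single: "i < nE N \<Longrightarrow> Aminus N (\<lambda>i'. if i' = i then v else 0) j = (if src N i = j then v else 0)"
  unfolding Aminus_def by (auto simp: sum.delta[unfolded Collect_conj_eq] intro: sum.neutral)

lemma Aplus0: "Aplus N (\<lambda>_. 0) j = 0" "Aminus N (\<lambda>_. 0) j = 0"
  by (simp_all add: Aplus_def Aminus_def)

lemma bX_tq: "i < nE N \<Longrightarrow> bX N n (tq i j a) x =
   - integral {0..ell N i} (\<lambda>s. s ^ j * (polyc n (dcoef n (xw x i)) s $ a))"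
  by (simp add: bX_def tq_def zeroV_def Aplus0 eA_inner if_distrib[of "\<lambda>v. v \<bullet> _"] sum_negf sum_int_single cong: if_cong)

lemma bX_tp: "i < nE N \<Longrightarrow> bX N n (tp i j a) x =
   - integral {0..ell N i} (\<lambda>s. s ^ j * ((polyc n (dcoef n (xv x i)) s + cross3 (tan N i) (polyc n (xw x i) s)) $ a))"
  by (simp add: bX_def tp_def zeroV_def Aplus0 eA_inner if_distrib[of "\<lambda>v. v \<bullet> _"] sum_negf sum_int_single cong: if_cong)

lemma sumV_single: "k < (n::nat) \<Longrightarrow> (\<Sum>j<n. (if k = j then eA a else 0) \<bullet> (V j :: real^3)) = V k $ a"
  by (simp add: if_distrib[of "\<lambda>v. v \<bullet> _"] eA_inner cong: if_cong)

lemma bX_tPp: "i < nE N \<Longrightarrow> tgt N i < nV N \<Longrightarrow> bX N n (tPp i a) x = polyc n (xv x i) (ell N i) $ a - xV x (tgt N i) $ a"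
  by (simp add: bX_def tPp_def zeroV_def Aplus0 Aplus_single eA_inner sumV_single
       if_distrib[of "\<lambda>v. v \<bullet> _"] sum_single cong: if_cong)
lemma bX_tPm: "i < nE N \<Longrightarrow> src N i < nV N \<Longrightarrow> bX N n (tPm i a) x = xV x (src N i) $ a - polyc n (xv x i) 0 $ a"
  by (simp add: bX_def tPm_def zeroV_def Aplus0 Aminus_single eA_inner sumV_single
       if_distrib[of "\<lambda>v. v \<bullet> _"] sum_single sum_negf sum.delta' cong: if_cong)
lemma bX_tQp: "i < nE N \<Longrightarrow> tgt N i < nV N \<Longrightarrow> bX N n (tQp i a) x = polyc n (xw x i) (ell N i) $ a - xW x (tgt N i) $ a"
  by (simp add: bX_def tQp_def zeroV_def Aplus0 Aplus_single eA_inner sumV_single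
       if_distrib[of "\<lambda>v. v \<bullet> _"] sum_single cong: if_cong)
lemma bX_tQm: "i < nE N \<Longrightarrow> src N i < nV N \<Longrightarrow> bX N n (tQm i a) x = xW x (src N i) $ a - polyc n (xw x i) 0 $ a"
  by (simp add: bX_def tQm_def zeroV_def Aplus0 Aminus_single eA_inner sumV_single
       if_distrib[of "\<lambda>v. v \<bullet> _"] sum_single sum_negf sum.delta' cong: if_cong)
lemma bX_tal: "bX N n (tal a) x = (\<Sum>i<nE N. integral {0..ell N i} (polyc n (xv x i))) $ a"
  by (simp add: bX_def tal_def zeroV_def Aplus0 eA_inner)
lemma bX_tbe: "bX N n (tbe a) x = (\<Sum>i<nE N. integral {0..ell N i} (polyc n (xw x i))) $ a"
  by (simp add: bX_def tbe_def zeroV_def Aplus0 eA_inner)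

lemma polyc_add_cross: "polyc m c s + cross3 T (polyc m d s) = polyc m (\<lambda>j. c j + cross3 T (d j)) s"
  by (induction m) (simp_all add: polyc_def cross_add_right cross_mult_right algebra_simps)

lemma cont_tq: "i < nE N \<Longrightarrow> continuous_on S (\<lambda>x. bX N n (tq i j a) x)"
  by (simp add: bX_tq, intro continuous_intros cont_IF1 cont_dcoef)

lemma cont_tp: "i < nE N \<Longrightarrow> continuous_on S (\<lambda>x. bX N n (tp i j a) x)"
  by (simp add: bX_tp polyc_add_cross, intro continuous_intros cont_IF1 cont_dcoef continuous_on_cross)

lemma cont_polyc_pt: "continuous_on S (\<lambda>x. polyc n (xv x i) l $ a)" "continuous_on S (\<lambda>x. polyc n (xw x i) l $ a)"
  by (simp_all add: polyc_component, (intro continuous_intros)+)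

lemma cont_tPp: "i < nE N \<Longrightarrow> tgt N i < nV N \<Longrightarrow> continuous_on S (\<lambda>x. bX N n (tPp i a) x)"
  by (simp add: bX_tPp, intro continuous_intros cont_polyc_pt)
lemma cont_tPm: "i < nE N \<Longrightarrow> src N i < nV N \<Longrightarrow> continuous_on S (\<lambda>x. bX N n (tPm i a) x)"
  by (simp add: bX_tPm, intro continuous_intros cont_polyc_pt)
lemma cont_tQp: "i < nE N \<Longrightarrow> tgt N i < nV N \<Longrightarrow> continuous_on S (\<lambda>x. bX N n (tQp i a) x)"
  by (simp add: bX_tQp, intro continuous_intros cont_polyc_pt)
lemma cont_tQm: "i < nE N \<Longrightarrow> src N i < nV N \<Longrightarrow> continuous_on S (\<lambda>x. bX N n (tQm i a) x)"
  by (simp add: bX_tQm, intro continuous_intros cont_polyc_pt)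

lemma int_polyc_comp: "integral {0..l} (polyc m c) $ a = integral {0..l} (\<lambda>s. s ^ 0 * (polyc m c s $ a))"
  by (simp, rule integral_component_eq_cart[symmetric]) (auto intro!: int_cont_real continuous_intros)

lemma cont_tal: "continuous_on S (\<lambda>x. bX N n (tal a) x)"
  by (simp add: bX_tal int_polyc_comp del: power_0, intro continuous_intros cont_IF1)
lemma cont_tbe: "continuous_on S (\<lambda>x. bX N n (tbe a) x)"
  by (simp add: bX_tbe int_polyc_comp del: power_0, intro continuous_intros cont_IF1)

lemma dpoly_k: "polyc (Suc k) (dcoef (Suc k) c) s $ a = (\<Sum>m\<le>k. dcoef (Suc k) c m $ a * s ^ m)"
  by (simp add: polyc_component dcoef_def)

lemma deriv_zero:
  assumes l: "0 < l" and I: "\<And>j a. j \<le> k \<Longrightarrow> integral {0..l} (\<lambda>s. s ^ j * (polyc (Suc k) (dcoef (Suc k) c) s $ a)) = 0"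
  shows "\<forall>j. 1 \<le> j \<and> j \<le> Suc k \<longrightarrow> c j = 0"
proof (intro allI impI)
  fix j assume j: "1 \<le> j \<and> j \<le> Suc k"
  then obtain m where m: "j = Suc m" "m \<le> k" by (cases j) auto
  have "c (Suc m) $ a = 0" for a
  proof -
    have "\<forall>m\<le>k. dcoef (Suc k) c m $ a = 0"
      by (rule orth_poly[OF l]) (use I in \<open>simp add: dpoly_k\<close>)
    with m have "real (Suc m) * c (Suc m) $ a = 0" by (simp add: dcoef_def)
    then show ?thesis by simp
  qed
  then show "c j = 0" using m by (simp add: vec_eq_iff)
qed

lemma polyc_const: "(\<And>j. 1 \<le> j \<Longrightarrow> j \<le> m \<Longrightarrow> c j = 0) \<Longrightarrow> polyc m c s = c 0"
proof -
  assume h: "\<And>j. 1 \<le> j \<Longrightarrow> j \<le> m \<Longrightarrow> c j = 0"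
  have "polyc m c s = (\<Sum>j\<le>m. if j = 0 then c 0 else 0)"
    unfolding polyc_def by (intro sum.cong refl) (auto simp: h)
  also have "\<dots> = c 0" by (subst sum.delta) auto
  finally show ?thesis .
qed

lemma conn:
  assumes SN: "straight_network N" and f: "\<And>i. i < nE N \<Longrightarrow> f (src N i) = f (tgt N i)" and j: "j < nV N"
  shows "f j = f (src N 0)"
proof -
  from SN have "0 < nE N" and "src N 0 < nV N" unfolding straight_network_def by auto
  with SN j have "(src N 0, j) \<in> (edge_rel N)\<^sup>*" unfolding straight_network_def by blast
  then have "f (src N 0) = f j"
  proof (induction rule: rtrancl_induct)
    case (step b c)
    from step(2) obtain i where "i < nE N" "(b, c) = (src N i, tgt N i) \<or> (b, c) = (tgt N i, src N i)"
      unfolding edge_rel_def by blast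
    with f step(3) show ?case by auto
  qed simp
  then show ?thesis by simp
qed

lemma int_const_poly: "0 \<le> l \<Longrightarrow> integral {0..l} (\<lambda>s. v) = l *\<^sub>R (v :: real^3)"
  by simp

definition T1 :: "network \<Rightarrow> nat \<Rightarrow> sigmaV set" where
  "T1 N k = (\<lambda>(i,j,a). tq i j a) ` ({..<nE N} \<times> {..k} \<times> UNIV)
          \<union> (\<lambda>(i,j,a). tp i j a) ` ({..<nE N} \<times> {..k} \<times> UNIV)
          \<union> (\<lambda>(i,a). tPp i a) ` ({..<nE N} \<times> UNIV) \<union> (\<lambda>(i,a). tPm i a) ` ({..<nE N} \<times> UNIV)
          \<union> (\<lambda>(i,a). tQp i a) ` ({..<nE N} \<times> UNIV) \<union> (\<lambda>(i,a). tQm i a) ` ({..<nE N} \<times> UNIV)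
          \<union> range tal \<union> range tbe"

lemma finite_T1: "finite (T1 N k)"
  unfolding T1_def by (intro finite_UnI finite_imageI finite_cartesian_product) auto

lemma T1_mem:
  "i < nE N \<Longrightarrow> j \<le> k \<Longrightarrow> tq i j a \<in> T1 N k"
  "i < nE N \<Longrightarrow> j \<le> k \<Longrightarrow> tp i j a \<in> T1 N k"
  "i < nE N \<Longrightarrow> tPp i a \<in> T1 N k" "i < nE N \<Longrightarrow> tPm i a \<in> T1 N k"
  "i < nE N \<Longrightarrow> tQp i a \<in> T1 N k" "i < nE N \<Longrightarrow> tQm i a \<in> T1 N k"
  "tal a \<in> T1 N k" "tbe a \<in> T1 N k"
proof -
  assume "i < nE N" "j \<le> k"
  then have "tq i j a \<in> (\<lambda>(i,j,a). tq i j a) ` ({..<nE N} \<times> {..k} \<times> UNIV)"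
    by (intro image_eqI[where x="(i,j,a)"]) auto
  then show "tq i j a \<in> T1 N k" unfolding T1_def by blast
next
  assume "i < nE N" "j \<le> k"
  then have "tp i j a \<in> (\<lambda>(i,j,a). tp i j a) ` ({..<nE N} \<times> {..k} \<times> UNIV)"
    by (intro image_eqI[where x="(i,j,a)"]) auto
  then show "tp i j a \<in> T1 N k" unfolding T1_def by blast
next
  assume "i < nE N"
  then have "tPp i a \<in> (\<lambda>(i,a). tPp i a) ` ({..<nE N} \<times> UNIV)"
    by (intro image_eqI[where x="(i,a)"]) auto
  then show "tPp i a \<in> T1 N k" unfolding T1_def by blast
next
  assume "i < nE N"
  then have "tPm i a \<in> (\<lambda>(i,a). tPm i a) ` ({..<nE N} \<times> UNIV)"
    by (intro image_eqI[where x="(i,a)"]) auto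
  then show "tPm i a \<in> T1 N k" unfolding T1_def by blast
next
  assume "i < nE N"
  then have "tQp i a \<in> (\<lambda>(i,a). tQp i a) ` ({..<nE N} \<times> UNIV)"
    by (intro image_eqI[where x="(i,a)"]) auto
  then show "tQp i a \<in> T1 N k" unfolding T1_def by blast
next
  assume "i < nE N"
  then have "tQm i a \<in> (\<lambda>(i,a). tQm i a) ` ({..<nE N} \<times> UNIV)"
    by (intro image_eqI[where x="(i,a)"]) auto
  then show "tQm i a \<in> T1 N k" unfolding T1_def by blast
next
  show "tal a \<in> T1 N k" unfolding T1_def by blast
next
  show "tbe a \<in> T1 N k" unfolding T1_def by blast
qed

lemma SN_facts:
  assumes "straight_network N"
  shows "0 < nE N" "\<And>i. i < nE N \<Longrightarrow> src N i < nV N" "\<And>i. i < nE N \<Longrightarrow> tgt N i < nV N"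
    "\<And>i. i < nE N \<Longrightarrow> 0 < ell N i"
  using assms unfolding straight_network_def by auto

lemma sum_ell_pos: "straight_network N \<Longrightarrow> 0 < (\<Sum>i<nE N. ell N i)"
  using SN_facts[of N] by (intro sum_pos) auto

lemma inj_core:
  assumes SN: "straight_network N" and nk: "n = Suc k" and s: "supp N n x"
    and Z: "\<And>S. S \<in> T1 N k \<Longrightarrow> bX N n S x = 0"
  shows "cs N n x = 0"
proof -
  note F = SN_facts[OF SN]
  have w1: "xw x i j = 0" if i: "i < nE N" and j: "1 \<le> j" "j \<le> n" for i j
  proof -
    have "integral {0..ell N i} (\<lambda>s. s ^ j' * (polyc (Suc k) (dcoef (Suc k) (xw x i)) s $ a)) = 0" if "j' \<le> k" for j' a
    proof -
      have "tq i j' a \<in> T1 N k" using i that by (rule T1_mem)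
      from Z[OF this] show ?thesis using i nk by (simp add: bX_tq)
    qed
    from deriv_zero[OF F(4)[OF i] this] j nk show ?thesis by auto
  qed
  have wc: "polyc n (xw x i) s = xw x i 0" if "i < nE N" for i s
    using w1[OF that] by (intro polyc_const) auto
  have wQ: "xw x i 0 = xW x (tgt N i)" "xW x (src N i) = xw x i 0" if i: "i < nE N" for i
  proof -
    have "tQp i a \<in> T1 N k" "tQm i a \<in> T1 N k" for a using i by (rule T1_mem)+
    then have "bX N n (tQp i a) x = 0" "bX N n (tQm i a) x = 0" for a using Z by auto
    then show "xw x i 0 = xW x (tgt N i)" "xW x (src N i) = xw x i 0"
      using i F by (auto simp: bX_tQp bX_tQm wc vec_eq_iff)
  qed
  define w0 where "w0 = xW x (src N 0)"
  have Wc: "xW x j = w0" if "j < nV N" for j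
    unfolding w0_def by (rule conn[OF SN _ that]) (use wQ in auto)
  have w0i: "xw x i 0 = w0" if "i < nE N" for i
    using wQ[OF that] Wc F that by auto
  have "w0 = 0"
  proof -
    have "bX N n (tbe a) x = 0" for a by (rule Z[OF T1_mem(8)])
    moreover have "(\<Sum>i<nE N. integral {0..ell N i} (polyc n (xw x i))) = (\<Sum>i<nE N. ell N i *\<^sub>R w0)"
    proof (intro sum.cong refl)
      fix i assume "i \<in> {..<nE N}"
      then have i: "i < nE N" by simp
      have "polyc n (xw x i) = (\<lambda>s. w0)" using wc[OF i] w0i[OF i] by (simp add: fun_eq_iff)
      then show "integral {0..ell N i} (polyc n (xw x i)) = ell N i *\<^sub>R w0" using F(4)[OF i] by simp
    qed
    ultimately have "((\<Sum>i<nE N. ell N i) *\<^sub>R w0) $ a = 0" for a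
      by (simp add: bX_tbe scaleR_sum_left)
    then have "(\<Sum>i<nE N. ell N i) *\<^sub>R w0 = 0" by (simp add: vec_eq_iff)
    with sum_ell_pos[OF SN] show ?thesis by simp
  qed
  have wz: "polyc n (xw x i) s = 0" if "i < nE N" for i s
    using wc[OF that] w0i[OF that] \<open>w0 = 0\<close> by simp
  have v1: "xv x i j = 0" if i: "i < nE N" and j: "1 \<le> j" "j \<le> n" for i j
  proof -
    have "integral {0..ell N i} (\<lambda>s. s ^ j' * (polyc (Suc k) (dcoef (Suc k) (xv x i)) s $ a)) = 0" if "j' \<le> k" for j' a
    proof -
      have "tp i j' a \<in> T1 N k" using i that by (rule T1_mem)
      from Z[OF this] show ?thesis using i wz[unfolded nk] by (simp add: bX_tp nk)
    qed
    from deriv_zero[OF F(4)[OF i] this] j nk show ?thesis by auto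
  qed
  have vc: "polyc n (xv x i) s = xv x i 0" if "i < nE N" for i s
    using v1[OF that] by (intro polyc_const) auto
  have vP: "xv x i 0 = xV x (tgt N i)" "xV x (src N i) = xv x i 0" if i: "i < nE N" for i
  proof -
    have "tPp i a \<in> T1 N k" "tPm i a \<in> T1 N k" for a using i by (rule T1_mem)+
    then have "bX N n (tPp i a) x = 0" "bX N n (tPm i a) x = 0" for a using Z by auto
    then show "xv x i 0 = xV x (tgt N i)" "xV x (src N i) = xv x i 0"
      using i F by (auto simp: bX_tPp bX_tPm vc vec_eq_iff)
  qed
  define v0 where "v0 = xV x (src N 0)"
  have Vc: "xV x j = v0" if "j < nV N" for j
    unfolding v0_def by (rule conn[OF SN _ that]) (use vP in auto)
  have v0i: "xv x i 0 = v0" if "i < nE N" for i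
    using vP[OF that] Vc F that by auto
  have "v0 = 0"
  proof -
    have "bX N n (tal a) x = 0" for a by (rule Z[OF T1_mem(7)])
    moreover have "(\<Sum>i<nE N. integral {0..ell N i} (polyc n (xv x i))) = (\<Sum>i<nE N. ell N i *\<^sub>R v0)"
    proof (intro sum.cong refl)
      fix i assume "i \<in> {..<nE N}"
      then have i: "i < nE N" by simp
      have "polyc n (xv x i) = (\<lambda>s. v0)" using vc[OF i] v0i[OF i] by (simp add: fun_eq_iff)
      then show "integral {0..ell N i} (polyc n (xv x i)) = ell N i *\<^sub>R v0" using F(4)[OF i] by simp
    qed
    ultimately have "((\<Sum>i<nE N. ell N i) *\<^sub>R v0) $ a = 0" for a
      by (simp add: bX_tal scaleR_sum_left)
    then have "(\<Sum>i<nE N. ell N i) *\<^sub>R v0 = 0" by (simp add: vec_eq_iff)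
    with sum_ell_pos[OF SN] show ?thesis by simp
  qed
  have allv: "xv x i j = 0" "xw x i j = 0" if "i < nE N" "j \<le> n" for i j
  proof -
    show "xv x i j = 0"
    proof (cases "j = 0")
      case True then show ?thesis using v0i[OF that(1)] \<open>v0 = 0\<close> by simp
    next
      case False then show ?thesis using v1[OF that(1)] that by simp
    qed
    show "xw x i j = 0"
    proof (cases "j = 0")
      case True then show ?thesis using w0i[OF that(1)] \<open>w0 = 0\<close> by simp
    next
      case False then show ?thesis using w1[OF that(1)] that by simp
    qed
  qed
  show ?thesis
    unfolding cs_def using allv Vc Wc \<open>v0 = 0\<close> \<open>w0 = 0\<close> by simp
qed

lemma cont_T1:
  assumes SN: "straight_network N" and S: "S \<in> T1 N k"
  shows "continuous_on UNIV (\<lambda>x. bX N n S x)"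
proof -
  note F = SN_facts[OF SN]
  from S show ?thesis
    unfolding T1_def
    by (elim UnE imageE; clarsimp; (intro cont_tq cont_tp cont_tPp cont_tPm cont_tQp cont_tQm cont_tal cont_tbe)?; simp add: F)
qed

lemma polyfun_mono: "j \<le> k \<Longrightarrow> polyfun k (\<lambda>s. s ^ j *\<^sub>R e)"
proof -
  assume j: "j \<le> k"
  have "s ^ j *\<^sub>R e = (\<Sum>m\<le>k. s ^ m *\<^sub>R (if m = j then e else 0))" for s :: real
    using j by (simp add: if_distrib[of "\<lambda>v. s ^ _ *\<^sub>R v"] cong: if_cong)
  then show ?thesis unfolding polyfun_def by (intro exI[where x="\<lambda>m. if m = j then e else 0"]) auto
qed

lemma polyfun_zero: "polyfun k (\<lambda>s. 0)"
  unfolding polyfun_def by (rule exI[where x="\<lambda>_. 0"]) simp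

lemma polyfun_if: "j \<le> k \<Longrightarrow> polyfun k (\<lambda>s. if b then s ^ j *\<^sub>R e else 0)"
  by (cases b) (simp_all add: polyfun_mono polyfun_zero)

lemma Pm_net_zero: "(\<lambda>_ _. 0) \<in> Pm_net N k"
  by (simp add: Pm_net_def polyfun_zero)

lemma Pm_net_single: "i < nE N \<Longrightarrow> j \<le> k \<Longrightarrow> (\<lambda>i' s. if i' = i then s ^ j *\<^sub>R e else 0) \<in> Pm_net N k"
  unfolding Pm_net_def by (auto simp: polyfun_if)

lemma blockvec_single: "i < m \<Longrightarrow> (\<lambda>i'. if i' = i then e else 0) \<in> blockvec m"
  unfolding blockvec_def by auto

lemma blockvec_zero: "(\<lambda>_. 0) \<in> blockvec m"
  unfolding blockvec_def by auto

lemma T1_Vk: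
  assumes S: "S \<in> T1 N k"
  shows "S \<in> Vk N k"
  using S unfolding T1_def
  by (elim UnE imageE; clarsimp simp: Vk_def tq_def tp_def tPp_def tPm_def tQp_def tQm_def tal_def tbe_def zeroV_def
      Pm_net_zero Pm_net_single blockvec_single blockvec_zero)

lemma pos_int_pow: "0 < l \<Longrightarrow> 0 < integral {0..l} (\<lambda>s::real. (s ^ j)\<^sup>2)"
proof -
  assume l: "0 < l"
  have nn: "0 \<le> integral {0..l} (\<lambda>s::real. (s ^ j)\<^sup>2)"
    by (intro integral_nonneg int_cont_real continuous_intros) auto
  have "integral {0..l} (\<lambda>s::real. (s ^ j)\<^sup>2) \<noteq> 0"
  proof
    assume z: "integral {0..l} (\<lambda>s::real. (s ^ j)\<^sup>2) = 0"
    have "(\<lambda>s::real. (\<Sum>m\<le>j. (if m = j then 1 else 0) * s ^ m)\<^sup>2) = (\<lambda>s. (s ^ j)\<^sup>2)"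
      by (simp add: if_distrib[of "\<lambda>v. v * _"] cong: if_cong)
    with z L0s[OF l, of "\<lambda>m. if m = j then 1 else 0" j] show False by auto
  qed
  with nn show ?thesis by simp
qed

lemma L2sq_zero: "L2sq N (\<lambda>_ _. 0) = 0" and vecsq_zero: "vecsq m (\<lambda>_. 0) = 0"
  by (simp_all add: L2sq_def vecsq_def)

lemma abs_pow_sq: "(\<bar>s::real\<bar> ^ j)\<^sup>2 = (s ^ j)\<^sup>2"
  by (metis power2_abs power_abs)

lemma L2sq_single: "i < nE N \<Longrightarrow> L2sq N (\<lambda>i' s. if i' = i then s ^ j *\<^sub>R eA a else 0) = integral {0..ell N i} (\<lambda>s. (s ^ j)\<^sup>2)"
  unfolding L2sq_def
  by (simp add: if_distrib[of "\<lambda>v. (norm v)\<^sup>2"] sum_int_single abs_pow_sq cong: if_cong)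

lemma vecsq_single: "i < m \<Longrightarrow> vecsq m (\<lambda>i'. if i' = i then eA a else 0) = 1"
  unfolding vecsq_def by (simp add: if_distrib[of "\<lambda>v. (norm v)\<^sup>2"] cong: if_cong)

lemma T1_normV:
  assumes SN: "straight_network N" and S: "S \<in> T1 N k"
  shows "0 < normV N S"
proof -
  note F = SN_facts[OF SN]
  from S show ?thesis
    unfolding T1_def
    by (elim UnE imageE; clarsimp simp: normV_def tq_def tp_def tPp_def tPm_def tQp_def tQm_def tal_def tbe_def zeroV_def
      L2sq_zero vecsq_zero L2sq_single vecsq_single F pos_int_pow)
qed



definition negV :: "sigmaV \<Rightarrow> sigmaV" where
  "negV S = \<lparr>sq = (\<lambda>i s. - sq S i s), sp = (\<lambda>i s. - sp S i s), sPp = (\<lambda>i. - sPp S i), sPm = (\<lambda>i. - sPm S i),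
            sQp = (\<lambda>i. - sQp S i), sQm = (\<lambda>i. - sQm S i), salpha = - salpha S, sbeta = - sbeta S\<rparr>"

lemma polyfun_neg: "polyfun k f \<Longrightarrow> polyfun k (\<lambda>s. - f s)"
  unfolding polyfun_def
proof -
  assume "\<exists>c. \<forall>s. f s = (\<Sum>j\<le>k. s ^ j *\<^sub>R c j)"
  then obtain c where c: "\<forall>s. f s = (\<Sum>j\<le>k. s ^ j *\<^sub>R c j)" by blast
  show "\<exists>c. \<forall>s. - f s = (\<Sum>j\<le>k. s ^ j *\<^sub>R c j)"
    by (rule exI[where x="\<lambda>j. - c j"]) (simp add: c sum_negf)
qed

lemma negV_Vk: "S \<in> Vk N k \<Longrightarrow> negV S \<in> Vk N k"
  unfolding Vk_def Pm_net_def blockvec_def negV_def by (auto intro: polyfun_neg)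

lemma normV_negV: "normV N (negV S) = normV N S"
  by (simp add: normV_def negV_def L2sq_def vecsq_def)

lemma Aplus_neg: "Aplus N (\<lambda>i. - P i) j = - Aplus N P j" "Aminus N (\<lambda>i. - P i) j = - Aminus N P j"
  by (simp_all add: Aplus_def Aminus_def sum_negf)

lemma bX_negV: "bX N n (negV S) x = - bX N n S x"
proof -
  have "integral {0..ell N i} (\<lambda>s.
         - (sp (negV S) i s \<bullet> (polyc n (dcoef n (xv x i)) s + cross3 (tan N i) (polyc n (xw x i) s)))
         - sq (negV S) i s \<bullet> polyc n (dcoef n (xw x i)) s) =
      - integral {0..ell N i} (\<lambda>s.
         - (sp S i s \<bullet> (polyc n (dcoef n (xv x i)) s + cross3 (tan N i) (polyc n (xw x i) s)))
         - sq S i s \<bullet> polyc n (dcoef n (xw x i)) s)" for i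
    by (subst integral_neg[symmetric]) (simp add: negV_def algebra_simps)
  then have I: "(\<Sum>i<nE N. integral {0..ell N i} (\<lambda>s.
         - (sp (negV S) i s \<bullet> (polyc n (dcoef n (xv x i)) s + cross3 (tan N i) (polyc n (xw x i) s)))
         - sq (negV S) i s \<bullet> polyc n (dcoef n (xw x i)) s)) =
      - (\<Sum>i<nE N. integral {0..ell N i} (\<lambda>s.
         - (sp S i s \<bullet> (polyc n (dcoef n (xv x i)) s + cross3 (tan N i) (polyc n (xw x i) s)))
         - sq S i s \<bullet> polyc n (dcoef n (xw x i)) s))"
    by (simp add: sum_negf)
  have B: "(\<Sum>i<nE N. sPp (negV S) i \<bullet> a i - sPm (negV S) i \<bullet> b i) = - (\<Sum>i<nE N. sPp S i \<bullet> a i - sPm S i \<bullet> b i)"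
    "(\<Sum>i<nE N. sQp (negV S) i \<bullet> a i - sQm (negV S) i \<bullet> b i) = - (\<Sum>i<nE N. sQp S i \<bullet> a i - sQm S i \<bullet> b i)"
    "(\<Sum>j<nV N. (Aplus N (sPp (negV S)) j - Aminus N (sPm (negV S)) j) \<bullet> V j) = - (\<Sum>j<nV N. (Aplus N (sPp S) j - Aminus N (sPm S) j) \<bullet> V j)"
    "(\<Sum>j<nV N. (Aplus N (sQp (negV S)) j - Aminus N (sQm (negV S)) j) \<bullet> V j) = - (\<Sum>j<nV N. (Aplus N (sQp S) j - Aminus N (sQm S) j) \<bullet> V j)"
    "salpha (negV S) \<bullet> m = - (salpha S \<bullet> m)" "sbeta (negV S) \<bullet> m = - (sbeta S \<bullet> m)"
    for a b :: "nat \<Rightarrow> real^3" and V :: "nat \<Rightarrow> real^3" and m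
    by (simp_all add: negV_def Aplus_neg sum_negf[symmetric] algebra_simps)
  show ?thesis
    unfolding bX_def I B by simp
qed

lemma normV_zeroV: "normV N zeroV = 0"
  by (simp add: normV_def zeroV_def L2sq_zero vecsq_zero)

lemma normV_pos_ne: "0 < normV N S \<Longrightarrow> S \<noteq> zeroV"
  using normV_zeroV by auto

lemma amgm_real: "0 < (r::real) \<Longrightarrow> 0 \<le> a \<Longrightarrow> 0 \<le> b \<Longrightarrow> a * b \<le> a\<^sup>2 / r + r * b\<^sup>2"
proof -
  assume r: "0 < r" and a: "0 \<le> a" and b: "0 \<le> b"
  have "0 \<le> (a - r * b)\<^sup>2 / r" using r by simp
  moreover have "(a - r * b)\<^sup>2 / r = a\<^sup>2 / r - 2 * a * b + r * b\<^sup>2"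
    using r by (simp add: field_simps power2_eq_square)
  moreover have "0 \<le> a * b" using a b by simp
  ultimately show ?thesis by linarith
qed

lemma amgm: "0 < r \<Longrightarrow> (u::real^3) \<bullet> w \<le> (norm u)\<^sup>2 / r + r * (norm w)\<^sup>2"
  using norm_cauchy_schwarz[of u w] amgm_real[of r "norm u" "norm w"] by simp

lemma amgm': "0 < r \<Longrightarrow> - ((u::real^3) \<bullet> w) \<le> (norm u)\<^sup>2 / r + r * (norm w)\<^sup>2"
  using amgm[of r "-u" w] by simp

lemma reindex_plus:
  assumes "\<And>i. i < nE N \<Longrightarrow> tgt N i < nV N"
  shows "(\<Sum>j<nV N. Aplus N P j \<bullet> V j) = (\<Sum>i<nE N. P i \<bullet> V (tgt N i))"
proof -
  have "(\<Sum>j<nV N. Aplus N P j \<bullet> V j) = (\<Sum>j<nV N. \<Sum>i\<in>{x. x \<in> {..<nE N} \<and> tgt N x = j}. P i \<bullet> V (tgt N i))"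
    unfolding Aplus_def by (intro sum.cong refl) (auto simp: inner_sum_left)
  also have "\<dots> = (\<Sum>i<nE N. P i \<bullet> V (tgt N i))"
    using assms by (intro sum.group) auto
  finally show ?thesis .
qed

lemma reindex_minus:
  assumes "\<And>i. i < nE N \<Longrightarrow> src N i < nV N"
  shows "(\<Sum>j<nV N. Aminus N P j \<bullet> V j) = (\<Sum>i<nE N. P i \<bullet> V (src N i))"
proof -
  have "(\<Sum>j<nV N. Aminus N P j \<bullet> V j) = (\<Sum>j<nV N. \<Sum>i\<in>{x. x \<in> {..<nE N} \<and> src N x = j}. P i \<bullet> V (src N i))"
    unfolding Aminus_def by (intro sum.cong refl) (auto simp: inner_sum_left)
  also have "\<dots> = (\<Sum>i<nE N. P i \<bullet> V (src N i))"
    using assms by (intro sum.group) auto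
  finally show ?thesis .
qed

lemma Vk_cont:
  assumes "S \<in> Vk N k" "i < nE N"
  shows "continuous_on A (sp S i)" "continuous_on A (sq S i)"
proof -
  from assms have "polyfun k (sp S i)" "polyfun k (sq S i)" unfolding Vk_def Pm_net_def by auto
  then obtain c d where "\<forall>s. sp S i s = polyc k c s" "\<forall>s. sq S i s = polyc k d s"
    unfolding polyfun_def polyc_def by blast
  then have "sp S i = polyc k c" "sq S i = polyc k d" by (simp_all add: fun_eq_iff)
  then show "continuous_on A (sp S i)" "continuous_on A (sq S i)" by (simp_all add: continuous_on_polyc)
qed

definition hX :: "network \<Rightarrow> nat \<Rightarrow> coord \<Rightarrow> nat \<Rightarrow> real \<Rightarrow> real^3" where
  "hX N n x i s = polyc n (dcoef n (xv x i)) s + cross3 (tan N i) (polyc n (xw x i) s)"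

definition XM :: "network \<Rightarrow> nat \<Rightarrow> coord \<Rightarrow> real" where
  "XM N n x = (\<Sum>i<nE N. integral {0..ell N i} (\<lambda>s. (norm (hX N n x i s))\<^sup>2)
                  + integral {0..ell N i} (\<lambda>s. (norm (polyc n (dcoef n (xw x i)) s))\<^sup>2))
    + (\<Sum>i<nE N. (norm (polyc n (xv x i) (ell N i)))\<^sup>2 + (norm (polyc n (xv x i) 0))\<^sup>2)
    + (\<Sum>i<nE N. (norm (polyc n (xw x i) (ell N i)))\<^sup>2 + (norm (polyc n (xw x i) 0))\<^sup>2)
    + (\<Sum>i<nE N. (norm (xV x (tgt N i)))\<^sup>2 + (norm (xV x (src N i)))\<^sup>2)
    + (\<Sum>i<nE N. (norm (xW x (tgt N i)))\<^sup>2 + (norm (xW x (src N i)))\<^sup>2)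
    + (norm (\<Sum>i<nE N. integral {0..ell N i} (polyc n (xv x i))))\<^sup>2
    + (norm (\<Sum>i<nE N. integral {0..ell N i} (polyc n (xw x i))))\<^sup>2"

lemma cont_hX: "continuous_on A (hX N n x i)"
  unfolding hX_def[abs_def] by (intro continuous_intros continuous_on_cross)

lemma int_pair_bound:
  fixes p q h g :: "real \<Rightarrow> real^3"
  assumes r: "0 < r" and c: "continuous_on {0..l} p" "continuous_on {0..l} q" "continuous_on {0..l} h" "continuous_on {0..l} g"
  shows "integral {0..l} (\<lambda>s. - (p s \<bullet> h s) - q s \<bullet> g s) \<le>
     (integral {0..l} (\<lambda>s. (norm (p s))\<^sup>2) + integral {0..l} (\<lambda>s. (norm (q s))\<^sup>2)) / r
     + r * (integral {0..l} (\<lambda>s. (norm (h s))\<^sup>2) + integral {0..l} (\<lambda>s. (norm (g s))\<^sup>2))"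
proof -
  have ip: "(\<lambda>s. (norm (p s))\<^sup>2) integrable_on {0..l}" "(\<lambda>s. (norm (q s))\<^sup>2) integrable_on {0..l}"
     "(\<lambda>s. (norm (h s))\<^sup>2) integrable_on {0..l}" "(\<lambda>s. (norm (g s))\<^sup>2) integrable_on {0..l}"
    using c by (auto intro!: int_cont_real continuous_intros)
  have "integral {0..l} (\<lambda>s. - (p s \<bullet> h s) - q s \<bullet> g s) \<le>
        integral {0..l} (\<lambda>s. (1/r) * ((norm (p s))\<^sup>2 + (norm (q s))\<^sup>2) + r * ((norm (h s))\<^sup>2 + (norm (g s))\<^sup>2))"
  proof (rule integral_le)
    show "(\<lambda>s. - (p s \<bullet> h s) - q s \<bullet> g s) integrable_on {0..l}"
      using c by (auto intro!: int_cont_real continuous_intros)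
    show "(\<lambda>s. (1/r) * ((norm (p s))\<^sup>2 + (norm (q s))\<^sup>2) + r * ((norm (h s))\<^sup>2 + (norm (g s))\<^sup>2)) integrable_on {0..l}"
      using c r by (auto intro!: int_cont_real continuous_intros)
    fix s
    show "- (p s \<bullet> h s) - q s \<bullet> g s \<le> (1/r) * ((norm (p s))\<^sup>2 + (norm (q s))\<^sup>2) + r * ((norm (h s))\<^sup>2 + (norm (g s))\<^sup>2)"
    proof -
      have e: "(1/r) * ((norm (p s))\<^sup>2 + (norm (q s))\<^sup>2) + r * ((norm (h s))\<^sup>2 + (norm (g s))\<^sup>2)
          = ((norm (p s))\<^sup>2/r + r*(norm (h s))\<^sup>2) + ((norm (q s))\<^sup>2/r + r*(norm (g s))\<^sup>2)"
        by (simp add: algebra_simps add_divide_distrib)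
      show ?thesis unfolding e using amgm'[OF r, of "p s" "h s"] amgm'[OF r, of "q s" "g s"] by linarith
    qed
  qed
  also have "\<dots> = (1/r) * (integral {0..l} (\<lambda>s. (norm (p s))\<^sup>2) + integral {0..l} (\<lambda>s. (norm (q s))\<^sup>2))
     + r * (integral {0..l} (\<lambda>s. (norm (h s))\<^sup>2) + integral {0..l} (\<lambda>s. (norm (g s))\<^sup>2))"
  proof -
    let ?P = "\<lambda>s. (norm (p s))\<^sup>2" and ?Q = "\<lambda>s. (norm (q s))\<^sup>2" and ?H = "\<lambda>s. (norm (h s))\<^sup>2" and ?G = "\<lambda>s. (norm (g s))\<^sup>2"
    have "integral {0..l} (\<lambda>s. (1/r) * (?P s + ?Q s) + r * (?H s + ?G s)) =
        integral {0..l} (\<lambda>s. (1/r) * (?P s + ?Q s)) + integral {0..l} (\<lambda>s. r * (?H s + ?G s))"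
      by (rule integral_add) (use c r in \<open>auto intro!: int_cont_real continuous_intros\<close>)
    also have "\<dots> = (1/r) * integral {0..l} (\<lambda>s. ?P s + ?Q s) + r * integral {0..l} (\<lambda>s. ?H s + ?G s)"
      by (simp only: integral_mult_const)
    also have "\<dots> = (1/r) * (integral {0..l} ?P + integral {0..l} ?Q) + r * (integral {0..l} ?H + integral {0..l} ?G)"
      using ip by (simp only: integral_add)
    finally show ?thesis .
  qed
  finally show ?thesis by simp
qed

lemma integral_nonneg_gen: "(\<And>x. x \<in> A \<Longrightarrow> 0 \<le> f x) \<Longrightarrow> 0 \<le> integral A (f :: _ \<Rightarrow> real)"
  by (cases "f integrable_on A") (auto intro: integral_nonneg simp: not_integrable_integral)

lemma L2sq_nn: "0 \<le> L2sq N f"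
  unfolding L2sq_def by (intro sum_nonneg integral_nonneg_gen) auto

lemma vecsq_nn: "0 \<le> vecsq m P"
  unfolding vecsq_def by (intro sum_nonneg) auto

lemma vecsq_neg: "vecsq m (\<lambda>i. - P i) = vecsq m P"
  by (simp add: vecsq_def)

lemma bnd_pair:
  assumes r: "0 < r"
  shows "(\<Sum>i<m. P i \<bullet> a i - M i \<bullet> b i) \<le> (vecsq m P + vecsq m M) / r + r * (\<Sum>i<m. (norm (a i))\<^sup>2 + (norm (b i))\<^sup>2)"
proof -
  have "(\<Sum>i<m. P i \<bullet> a i - M i \<bullet> b i) \<le> (\<Sum>i<m. ((norm (P i))\<^sup>2 / r + r * (norm (a i))\<^sup>2) + ((norm (M i))\<^sup>2 / r + r * (norm (b i))\<^sup>2))"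
    by (intro sum_mono) (use amgm[OF r] amgm'[OF r] in \<open>smt (verit)\<close>)
  also have "\<dots> = (vecsq m P + vecsq m M) / r + r * (\<Sum>i<m. (norm (a i))\<^sup>2 + (norm (b i))\<^sup>2)"
    by (simp add: vecsq_def sum.distrib sum_divide_distrib sum_distrib_left add_divide_distrib algebra_simps)
  finally show ?thesis .
qed

lemma bnd_A:
  assumes r: "0 < r" and SN: "straight_network N"
  shows "- (\<Sum>j<nV N. (Aplus N P j - Aminus N M j) \<bullet> V j) \<le>
    (vecsq (nE N) P + vecsq (nE N) M) / r + r * (\<Sum>i<nE N. (norm (V (tgt N i)))\<^sup>2 + (norm (V (src N i)))\<^sup>2)"
proof -
  note F = SN_facts[OF SN]
  have "- (\<Sum>j<nV N. (Aplus N P j - Aminus N M j) \<bullet> V j) = (\<Sum>i<nE N. (- P i) \<bullet> V (tgt N i) - (- M i) \<bullet> V (src N i))"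
    by (simp add: inner_diff_left sum_subtractf reindex_plus[OF F(3)] reindex_minus[OF F(2)])
  also have "\<dots> \<le> (vecsq (nE N) (\<lambda>i. - P i) + vecsq (nE N) (\<lambda>i. - M i)) / r + r * (\<Sum>i<nE N. (norm (V (tgt N i)))\<^sup>2 + (norm (V (src N i)))\<^sup>2)"
    by (rule bnd_pair[OF r])
  finally show ?thesis by (simp add: vecsq_neg)
qed

lemma bX_bound:
  assumes SN: "straight_network N" and S: "S \<in> Vk N k" and rpos: "0 < normV N S"
  shows "bX N n S x \<le> normV N S * (2 + XM N n x)"
proof -
  note F = SN_facts[OF SN]
  define r where "r = normV N S"
  have r: "0 < r" using rpos r_def by simp
  define Q where "Q = L2sq N (sq S) + L2sq N (sp S) + vecsq (nE N) (sPp S) + vecsq (nE N) (sPm S)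
      + vecsq (nE N) (sQp S) + vecsq (nE N) (sQm S) + (norm (salpha S))\<^sup>2 + (norm (sbeta S))\<^sup>2"
  have Qnn: "0 \<le> Q" unfolding Q_def by (intro add_nonneg_nonneg L2sq_nn vecsq_nn zero_le_power2)
  have rQ: "r\<^sup>2 = Q" unfolding r_def normV_def Q_def[symmetric] using Qnn by simp
  let ?I = "\<Sum>i<nE N. integral {0..ell N i} (\<lambda>s.
         - (sp S i s \<bullet> (polyc n (dcoef n (xv x i)) s + cross3 (tan N i) (polyc n (xw x i) s)))
         - sq S i s \<bullet> polyc n (dcoef n (xw x i)) s)"
  have I: "?I \<le> (L2sq N (sp S) + L2sq N (sq S)) / r + r * (\<Sum>i<nE N. integral {0..ell N i} (\<lambda>s. (norm (hX N n x i s))\<^sup>2)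
                  + integral {0..ell N i} (\<lambda>s. (norm (polyc n (dcoef n (xw x i)) s))\<^sup>2))"
  proof -
    have "?I \<le> (\<Sum>i<nE N. (integral {0..ell N i} (\<lambda>s. (norm (sp S i s))\<^sup>2) + integral {0..ell N i} (\<lambda>s. (norm (sq S i s))\<^sup>2)) / r
     + r * (integral {0..ell N i} (\<lambda>s. (norm (hX N n x i s))\<^sup>2) + integral {0..ell N i} (\<lambda>s. (norm (polyc n (dcoef n (xw x i)) s))\<^sup>2)))"
    proof (rule sum_mono)
      fix i assume "i \<in> {..<nE N}"
      then have i: "i < nE N" by simp
      show "integral {0..ell N i} (\<lambda>s.
         - (sp S i s \<bullet> (polyc n (dcoef n (xv x i)) s + cross3 (tan N i) (polyc n (xw x i) s)))
         - sq S i s \<bullet> polyc n (dcoef n (xw x i)) s) \<le> (integral {0..ell N i} (\<lambda>s. (norm (sp S i s))\<^sup>2) + integral {0..ell N i} (\<lambda>s. (norm (sq S i s))\<^sup>2)) / r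
     + r * (integral {0..ell N i} (\<lambda>s. (norm (hX N n x i s))\<^sup>2) + integral {0..ell N i} (\<lambda>s. (norm (polyc n (dcoef n (xw x i)) s))\<^sup>2))"
        using int_pair_bound[OF r Vk_cont(1)[OF S i] Vk_cont(2)[OF S i] cont_hX continuous_on_polyc,
            of "ell N i" N n x i n "dcoef n (xw x i)"]
        by (simp add: hX_def)
    qed
    also have "\<dots> = (L2sq N (sp S) + L2sq N (sq S)) / r + r * (\<Sum>i<nE N. integral {0..ell N i} (\<lambda>s. (norm (hX N n x i s))\<^sup>2)
                  + integral {0..ell N i} (\<lambda>s. (norm (polyc n (dcoef n (xw x i)) s))\<^sup>2))"
      by (simp add: L2sq_def sum.distrib sum_divide_distrib sum_distrib_left add_divide_distrib distrib_left)
    finally show ?thesis .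
  qed
  have BP: "(\<Sum>i<nE N. sPp S i \<bullet> polyc n (xv x i) (ell N i) - sPm S i \<bullet> polyc n (xv x i) 0) \<le>
     (vecsq (nE N) (sPp S) + vecsq (nE N) (sPm S)) / r + r * (\<Sum>i<nE N. (norm (polyc n (xv x i) (ell N i)))\<^sup>2 + (norm (polyc n (xv x i) 0))\<^sup>2)"
    by (rule bnd_pair[OF r])
  have BQ: "(\<Sum>i<nE N. sQp S i \<bullet> polyc n (xw x i) (ell N i) - sQm S i \<bullet> polyc n (xw x i) 0) \<le>
     (vecsq (nE N) (sQp S) + vecsq (nE N) (sQm S)) / r + r * (\<Sum>i<nE N. (norm (polyc n (xw x i) (ell N i)))\<^sup>2 + (norm (polyc n (xw x i) 0))\<^sup>2)"
    by (rule bnd_pair[OF r])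
  have AP: "- (\<Sum>j<nV N. (Aplus N (sPp S) j - Aminus N (sPm S) j) \<bullet> xV x j) \<le>
    (vecsq (nE N) (sPp S) + vecsq (nE N) (sPm S)) / r + r * (\<Sum>i<nE N. (norm (xV x (tgt N i)))\<^sup>2 + (norm (xV x (src N i)))\<^sup>2)"
    by (rule bnd_A[OF r SN])
  have AQ: "- (\<Sum>j<nV N. (Aplus N (sQp S) j - Aminus N (sQm S) j) \<bullet> xW x j) \<le>
    (vecsq (nE N) (sQp S) + vecsq (nE N) (sQm S)) / r + r * (\<Sum>i<nE N. (norm (xW x (tgt N i)))\<^sup>2 + (norm (xW x (src N i)))\<^sup>2)"
    by (rule bnd_A[OF r SN])
  have al: "salpha S \<bullet> m \<le> (norm (salpha S))\<^sup>2 / r + r * (norm m)\<^sup>2" for m by (rule amgm[OF r])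
  have be: "sbeta S \<bullet> m \<le> (norm (sbeta S))\<^sup>2 / r + r * (norm m)\<^sup>2" for m by (rule amgm[OF r])
  define Y where "Y = (L2sq N (sp S) + L2sq N (sq S)) + 2 * (vecsq (nE N) (sPp S) + vecsq (nE N) (sPm S))
     + 2 * (vecsq (nE N) (sQp S) + vecsq (nE N) (sQm S)) + (norm (salpha S))\<^sup>2 + (norm (sbeta S))\<^sup>2"
  have "bX N n S x \<le> Y / r + r * XM N n x"
    unfolding bX_def XM_def Y_def
    using I BP BQ AP AQ al[of "\<Sum>i<nE N. integral {0..ell N i} (polyc n (xv x i))"]
      be[of "\<Sum>i<nE N. integral {0..ell N i} (polyc n (xw x i))"]
    by (simp add: add_divide_distrib distrib_left)
  moreover have "Y \<le> 2 * r\<^sup>2"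
    unfolding rQ Y_def Q_def using L2sq_nn[of N "sp S"] L2sq_nn[of N "sq S"] by simp
  then have "Y / r \<le> 2 * r" using r by (simp add: divide_le_eq power2_eq_square)
  ultimately have "bX N n S x \<le> 2 * r + r * XM N n x" by linarith
  then show ?thesis unfolding r_def by (simp add: distrib_left)
qed



lemma normV_nn: "0 \<le> normV N S"
  unfolding normV_def by (intro real_sqrt_ge_zero add_nonneg_nonneg L2sq_nn vecsq_nn zero_le_power2)

lemma supp_smul: "supp N n x \<Longrightarrow> supp N n (smul t x)"
  by (simp add: supp_def)

lemma mkM_Mn: "mkM N n x \<in> Mn N n"
  unfolding Mn_def Pm_net_def blockvec_def polyfun_def mkM_def polyc_def by auto

lemma Mn_nonempty:
  assumes SN: "straight_network N"
  shows "Mn N n - {zeroM} \<noteq> {}"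
proof -
  have nV: "0 < nV N" using SN unfolding straight_network_def by auto
  define x :: coord where "x = ((\<lambda>i j. 0), (\<lambda>i j. 0), (\<lambda>j. if j = 0 then eA 1 else 0), (\<lambda>j. 0))"
  have "pV (mkM N n x) 0 = eA 1" using nV by (simp add: mkM_def x_def xV_def)
  then have "mkM N n x \<noteq> zeroM" by (auto simp: zeroM_def)
  with mkM_Mn[of N n x] show ?thesis by blast
qed

lemma exists_big:
  fixes f :: "'a \<Rightarrow> real"
  assumes "finite A" "A \<noteq> {}" "c \<le> (\<Sum>a\<in>A. f a)"
  shows "\<exists>a\<in>A. c / real (card A) \<le> f a"
proof (rule ccontr)
  assume "\<not> ?thesis"
  then have "\<And>a. a \<in> A \<Longrightarrow> f a < c / real (card A)" by auto
  then have "(\<Sum>a\<in>A. f a) < (\<Sum>a\<in>A. c / real (card A))"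
    using assms by (intro sum_strict_mono) auto
  also have "\<dots> = c" using assms by simp
  finally show False using assms by simp
qed

theorem corollary4p4:
  fixes N :: network and k n :: nat
  assumes "straight_network N"
    and "n = k + 1"
  shows "\<exists>kd > 0. (INF P \<in> Mn N n - {zeroM}. SUP S \<in> Vk N k - {zeroV}.
                      bform N S P / (normV N S * normM N P)) \<ge> kd"
proof -
  note SN = assms(1)
  have nk: "n = Suc k" using assms(2) by simp
  note F = SN_facts[OF SN]
  define K where "K = Kset N n"
  define T where "T = T1 N k"
  define g where "g x = (\<Sum>S\<in>T. \<bar>bX N n S x\<bar>)" for x
  have finT: "finite T" unfolding T_def by (rule finite_T1)
  have TnE: "T \<noteq> {}" using T1_mem(7)[of 1 N k] unfolding T_def by blast
  have cK: "compact K" unfolding K_def by (rule compact_Kset)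
  have cg: "continuous_on K g"
    unfolding g_def[abs_def]
    by (intro continuous_intros continuous_on_subset[OF cont_T1[OF SN]]) (auto simp: T_def)
  have gpos: "0 < g x" if x: "x \<in> K" for x
  proof -
    have nn: "0 \<le> g x" unfolding g_def by (intro sum_nonneg) auto
    have "g x \<noteq> 0"
    proof
      assume z: "g x = 0"
      have "bX N n S x = 0" if "S \<in> T1 N k" for S
        using sum_nn_0[OF finT _ z[unfolded g_def], of S] that by (auto simp: T_def)
      then have "cs N n x = 0" using x by (intro inj_core[OF SN nk]) (auto simp: K_def Kset_def)
      then show False using x by (simp add: K_def Kset_def)
    qed
    with nn show ?thesis by simp
  qed
  obtain c where c: "0 < c" "\<And>x. x \<in> K \<Longrightarrow> c \<le> g x"
  proof (cases "K = {}")
    case True then show ?thesis using that[of 1] by simp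
  next
    case False
    from continuous_attains_inf[OF cK False cg] obtain x0 where "x0 \<in> K" "\<And>y. y \<in> K \<Longrightarrow> g x0 \<le> g y" by blast
    then show ?thesis using that[of "g x0"] gpos by blast
  qed
  obtain D where D: "0 < D" "\<And>x. x \<in> K \<Longrightarrow> normM N (mkM N n x) \<le> D"
  proof (cases "K = {}")
    case True then show ?thesis using that[of 1] by simp
  next
    case False
    from continuous_attains_sup[OF cK False cont_normM] obtain x1 where
      "x1 \<in> K" "\<And>y. y \<in> K \<Longrightarrow> normM N (mkM N n y) \<le> normM N (mkM N n x1)" by blast
    then show ?thesis using that[of "max 1 (normM N (mkM N n x1))"] by force
  qed
  define NV where "NV = (\<Sum>S\<in>T. normV N S)"
  have NVge: "normV N S \<le> NV" if "S \<in> T" for S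
    unfolding NV_def using finT that by (intro member_le_sum) (auto simp: normV_nn)
  have NVpos: "0 < NV" using NVge[of "tal 1"] T1_normV[OF SN T1_mem(7)[of 1 N k]] T1_mem(7)[of 1 N k] unfolding T_def by linarith
  define m where "m = real (card T)"
  have mpos: "0 < m" unfolding m_def using finT TnE by (simp add: card_gt_0_iff)
  define kd where "kd = c / (m * NV * D)"
  have kdpos: "0 < kd" unfolding kd_def using c mpos NVpos D by simp
  have main: "kd \<le> (SUP S \<in> Vk N k - {zeroV}. bform N S P / (normV N S * normM N P))"
    if P: "P \<in> Mn N n - {zeroM}" for P
  proof -
    obtain x where sx: "supp N n x" and xP: "mkM N n x = P" using Mn_coords[of P N n] P by blast
    have csx: "cs N n x \<noteq> 0" using mkM_zero[OF sx] xP P by blast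
    then have csp: "0 < cs N n x" using cs_nonneg[of N n x] by simp
    define \<rho> where "\<rho> = sqrt (cs N n x)"
    have \<rho>: "0 < \<rho>" unfolding \<rho>_def using csp by simp
    define x' where "x' = smul (1 / \<rho>) x"
    have x'K: "x' \<in> K"
      unfolding K_def Kset_def x'_def using sx csp
      by (simp add: supp_smul cs_smul \<rho>_def power_divide)
    have xx': "x = smul \<rho> x'" unfolding x'_def using \<rho> by (simp add: smul_smul smul_one)
    have nMx': "0 < normM N (mkM N n x')"
      using normM_pos[OF F(4), of n x'] x'K by (simp add: K_def Kset_def)
    have nMP: "normM N P = \<rho> * normM N (mkM N n x')"
      using xP xx' normM_smul[of N n \<rho> x'] \<rho> by simp
    have nMPpos: "0 < normM N P" using nMP nMx' \<rho> by simp
    obtain S0 where S0: "S0 \<in> T" "c / m \<le> \<bar>bX N n S0 x'\<bar>"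
      using exists_big[OF finT TnE, of c "\<lambda>S. \<bar>bX N n S x'\<bar>"] c(2)[OF x'K] unfolding g_def m_def by blast
    have S0V: "S0 \<in> Vk N k" and S0n: "0 < normV N S0" using S0(1) T1_Vk T1_normV[OF SN] by (auto simp: T_def)
    define S1 where "S1 = (if 0 \<le> bX N n S0 x' then S0 else negV S0)"
    have S1b: "bX N n S1 x' = \<bar>bX N n S0 x'\<bar>" by (simp add: S1_def bX_negV)
    have S1n: "normV N S1 = normV N S0" by (simp add: S1_def normV_negV)
    have S1V: "S1 \<in> Vk N k - {zeroV}"
      using S0V negV_Vk[OF S0V] normV_pos_ne[of N S1] S0n S1n by (auto simp: S1_def)
    have ratio: "bform N S1 P / (normV N S1 * normM N P) = \<bar>bX N n S0 x'\<bar> / (normV N S0 * normM N (mkM N n x'))"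
    proof -
      have "bform N S1 P = \<rho> * \<bar>bX N n S0 x'\<bar>"
        using xP xx' bform_smul[of N S1 n \<rho> x'] by (simp add: bform_mkM S1b)
      then show ?thesis using nMP S1n \<rho> by simp
    qed
    have "kd \<le> \<bar>bX N n S0 x'\<bar> / (normV N S0 * normM N (mkM N n x'))"
    proof -
      have "kd = (c / m) / (NV * D)" unfolding kd_def by simp
      also have "\<dots> \<le> \<bar>bX N n S0 x'\<bar> / (NV * D)"
        using S0(2) NVpos D(1) by (intro divide_right_mono) auto
      also have "\<dots> \<le> \<bar>bX N n S0 x'\<bar> / (normV N S0 * normM N (mkM N n x'))"
        using NVge[OF S0(1)] D(2)[OF x'K] S0n nMx'
        by (intro divide_left_mono mult_mono mult_pos_pos) auto
      finally show ?thesis .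
    qed
    then have le1: "kd \<le> bform N S1 P / (normV N S1 * normM N P)" using ratio by simp
    have bdd: "bdd_above ((\<lambda>S. bform N S P / (normV N S * normM N P)) ` (Vk N k - {zeroV}))"
    proof (rule bdd_aboveI2)
      fix S assume S: "S \<in> Vk N k - {zeroV}"
      show "bform N S P / (normV N S * normM N P) \<le> \<bar>2 + XM N n x\<bar> / normM N P"
      proof (cases "normV N S = 0")
        case True then show ?thesis using nMPpos by simp
      next
        case False
        then have nV: "0 < normV N S" using normV_nn[of N S] by simp
        have "bform N S P \<le> normV N S * (2 + XM N n x)"
          using bX_bound[OF SN _ nV, where n=n and x=x and k=k] S xP by (simp add: bform_mkM[symmetric])
        also have "\<dots> \<le> normV N S * \<bar>2 + XM N n x\<bar>" using nV by simp
        finally have "bform N S P / (normV N S * normM N P) \<le> normV N S * \<bar>2 + XM N n x\<bar> / (normV N S * normM N P)"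
          using nV nMPpos by (intro divide_right_mono) auto
        also have "\<dots> = \<bar>2 + XM N n x\<bar> / normM N P" using nV by simp
        finally show ?thesis .
      qed
    qed
    show ?thesis by (rule cSUP_upper2[OF bdd S1V le1])
  qed
  have "kd \<le> (INF P \<in> Mn N n - {zeroM}. SUP S \<in> Vk N k - {zeroV}. bform N S P / (normV N S * normM N P))"
    by (rule cINF_greatest[OF Mn_nonempty[OF SN] main])
  with kdpos show ?thesis by blast
qed

end
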